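(* Let $\bm X$ have standard exponential margins and follow a block geometric extremal graphical model relative to a block graph $\mathcal G=(V,E)$ with gauge $g$. For distinct $i,j\in V$, let $i=v_0,v_1,\dots,v_m=j$ be the vertices of the unique shortest path from $i$ to $j$. Then $$g_{\{i,j\}}(x_i,x_j)=\min_{x_{v_1},\dots,x_{v_{m-1}}\ge0}\Big\{\sum_{k=1}^{m}g_{\{v_{k-1},v_k\}}(x_{v_{k-1}},x_{v_k})-\sum_{k=1}^{m-1}x_{v_k}\Big\},$$ i.e. $g_{\{i,j\}}$ is the bivariate marginal of the chain geometric extremal graphical model on the path vertices $v_0,\dots,v_m$ with bivariate gauges $g_{\{v_{k-1},v_k\}}$.
   Context: $\bm X=(X_k:k\in V)$ has a Lebesgue density $f$ and continuous gauge $g:[0,\infty)^d\to[0,\infty)$ with $-\log f(t\bm x_t)/t\to g(\bm x)$ whenever $\bm x_t\to\bm x\in[0,\infty)^d$; marginal gauges $g_J(\bm x_J)=\min_{x_k\ge0,\,k\notin J}g(\bm x)$, which satisfy $g_J\ge\max_{j\in J}x_j$. Block graph: connected decomposable graph with cliques $C_1,\dots,C_N$ ordered by the running intersection property, whose separators $D_k=C_k\cap\bigcup_{l<k}C_l$ are single vertices; the path vertices $v_1,\dots,v_{m-1}$ are separators. Block geometric extremal graphical model: $g(\bm x)=\sum_k g_{C_k}(\bm x_{C_k})-\sum_{k=2}^Nx_{D_k}$. *)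

theory Defs
  imports "HOL-Probability.Probability"
begin

definition is_clique :: "('v \<Rightarrow> 'v \<Rightarrow> bool) \<Rightarrow> 'v set \<Rightarrow> bool" where
  "is_clique E C \<longleftrightarrow> (\<forall>a\<in>C. \<forall>b\<in>C. a \<noteq> b \<longrightarrow> E a b)"

definition maximal_clique :: "('v \<Rightarrow> 'v \<Rightarrow> bool) \<Rightarrow> 'v set \<Rightarrow> bool" where
  "maximal_clique E C \<longleftrightarrow> is_clique E C \<and> (\<forall>C'. is_clique E C' \<and> C \<subseteq> C' \<longrightarrow> C' = C)"

definition separator :: "'v set list \<Rightarrow> nat \<Rightarrow> 'v set" where
  "separator Cs k = Cs ! k \<inter> (\<Union>l<k. Cs ! l)"

(* Block graph: the list Cs enumerates (without repetition) exactly the maximal cliques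
   of the graph, in an order in which every separator D_k (k \<ge> 2, i.e. 0-based k \<ge> 1)
   is a single vertex.  This is a running-intersection (perfect) ordering, so the graph is
   decomposable, and it is connected since all separators are nonempty. *)
definition block_graph :: "('v \<Rightarrow> 'v \<Rightarrow> bool) \<Rightarrow> 'v set list \<Rightarrow> bool" where
  "block_graph E Cs \<longleftrightarrow>
     (\<forall>a b. E a b \<longrightarrow> E b a) \<and> (\<forall>a. \<not> E a a) \<and>
     distinct Cs \<and> set Cs = {C. maximal_clique E C} \<and>
     (\<forall>k. 1 \<le> k \<and> k < length Cs \<longrightarrow> (\<exists>v. separator Cs k = {v}))"

definition is_walk :: "('v \<Rightarrow> 'v \<Rightarrow> bool) \<Rightarrow> 'v list \<Rightarrow> 'v \<Rightarrow> 'v \<Rightarrow> bool" where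
  "is_walk E ps i j \<longleftrightarrow> ps \<noteq> [] \<and> hd ps = i \<and> last ps = j \<and>
     (\<forall>k. Suc k < length ps \<longrightarrow> E (ps ! k) (ps ! Suc k))"

definition is_shortest_path :: "('v \<Rightarrow> 'v \<Rightarrow> bool) \<Rightarrow> 'v list \<Rightarrow> 'v \<Rightarrow> 'v \<Rightarrow> bool" where
  "is_shortest_path E ps i j \<longleftrightarrow> is_walk E ps i j \<and>
     (\<forall>qs. is_walk E qs i j \<longrightarrow> length ps \<le> length qs)"

definition nonneg_orthant :: "(real ^ 'v) set" where
  "nonneg_orthant = {x. \<forall>k. 0 \<le> x $ k}"

(* marginal gauge g_J(x_J) = min over x_k \<ge> 0 (k \<notin> J) of g(x); represented as a
   function of the full vector that depends only on the coordinates in J *)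
definition marg_gauge :: "(real ^ 'v \<Rightarrow> real) \<Rightarrow> 'v set \<Rightarrow> real ^ 'v \<Rightarrow> real" where
  "marg_gauge g J x = (INF y \<in> {y. (\<forall>j\<in>J. y $ j = x $ j) \<and> (\<forall>k. k \<notin> J \<longrightarrow> 0 \<le> y $ k)}. g y)"

definition is_gauge :: "(real ^ 'v \<Rightarrow> real) \<Rightarrow> (real ^ 'v \<Rightarrow> real) \<Rightarrow> bool" where
  "is_gauge f g \<longleftrightarrow>
     continuous_on nonneg_orthant g \<and> (\<forall>x\<in>nonneg_orthant. 0 \<le> g x) \<and>
     (\<forall>x\<in>nonneg_orthant. \<forall>xt :: real \<Rightarrow> real ^ 'v.
        (\<forall>t. xt t \<in> nonneg_orthant) \<longrightarrow> (xt \<longlongrightarrow> x) at_top \<longrightarrow>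
        ((\<forall>\<^sub>F t in at_top. 0 < f (t *\<^sub>R xt t)) \<and>
         ((\<lambda>t. - ln (f (t *\<^sub>R xt t)) / t) \<longlongrightarrow> g x) at_top))"

definition block_geometric_model ::
    "('v \<Rightarrow> 'v \<Rightarrow> bool) \<Rightarrow> 'v set list \<Rightarrow> (real ^ 'v \<Rightarrow> real) \<Rightarrow> bool" where
  "block_geometric_model E Cs g \<longleftrightarrow> block_graph E Cs \<and>
     (\<forall>x\<in>nonneg_orthant.
        g x = (\<Sum>k<length Cs. marg_gauge g (Cs ! k) x)
              - (\<Sum>k\<in>{1..<length Cs}. \<Sum>v\<in>separator Cs k. x $ v))"

end

theory Submission
  imports Defs
begin


lemma mem_O[simp]: "z \<in> nonneg_orthant \<longleftrightarrow> (\<forall>k. 0 \<le> z $ k)"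
  by (simp add: nonneg_orthant_def)

definition Fs :: "'v set \<Rightarrow> real ^ 'v \<Rightarrow> (real ^ 'v) set" where
  "Fs W y = {z. (\<forall>v. 0 \<le> z $ v) \<and> (\<forall>v. v \<notin> W \<longrightarrow> z $ v = y $ v)}"

definition minf :: "(real ^ 'v \<Rightarrow> real) \<Rightarrow> 'v set \<Rightarrow> real ^ 'v \<Rightarrow> real" where
  "minf F W y = (INF z \<in> Fs W y. F z)"

definition lbd :: "(real ^ 'v \<Rightarrow> real) \<Rightarrow> bool" where
  "lbd F \<longleftrightarrow> (\<exists>c. \<forall>z. (\<forall>v. 0 \<le> z $ v) \<longrightarrow> c \<le> F z)"

definition dep :: "(real ^ 'v \<Rightarrow> real) \<Rightarrow> 'v set \<Rightarrow> bool" where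
  "dep F K \<longleftrightarrow> (\<forall>y z. (\<forall>v\<in>K. y $ v = z $ v) \<longrightarrow> F y = F z)"

lemma Fs_self: "\<forall>v. 0 \<le> y $ v \<Longrightarrow> y \<in> Fs W y"
  by (simp add: Fs_def)

lemma Fs_ne: "\<forall>v. 0 \<le> y $ v \<Longrightarrow> Fs W y \<noteq> {}"
  using Fs_self by blast

lemma Fs_nonneg: "z \<in> Fs W y \<Longrightarrow> 0 \<le> z $ v"
  by (simp add: Fs_def)

lemma lbdD: "lbd F \<Longrightarrow> \<exists>c. \<forall>z. (\<forall>v. 0 \<le> z $ v) \<longrightarrow> c \<le> F z"
  by (simp add: lbd_def)

lemma lbd_bdd: "lbd F \<Longrightarrow> bdd_below (F ` Fs W y)"
  unfolding lbd_def bdd_below_def by (auto simp: Fs_def)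

lemma minf_le: "lbd F \<Longrightarrow> z \<in> Fs W y \<Longrightarrow> minf F W y \<le> F z"
  unfolding minf_def by (rule cINF_lower[OF lbd_bdd])

lemma minf_ge: "\<forall>v. 0 \<le> y $ v \<Longrightarrow> (\<And>z. z \<in> Fs W y \<Longrightarrow> c \<le> F z) \<Longrightarrow> c \<le> minf F W y"
  unfolding minf_def by (rule cINF_greatest[OF Fs_ne]) auto

lemma minf_lbd_val: "lbd F \<Longrightarrow> \<forall>v. 0 \<le> y $ v \<Longrightarrow> \<exists>c. (\<forall>z. (\<forall>v. 0 \<le> z $ v) \<longrightarrow> c \<le> F z) \<and> c \<le> minf F W y"
proof -
  assume l: "lbd F" and y: "\<forall>v. 0 \<le> y $ v"
  then obtain c where c: "\<forall>z. (\<forall>v. 0 \<le> z $ v) \<longrightarrow> c \<le> F z" by (auto simp: lbd_def)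
  have "c \<le> minf F W y" by (rule minf_ge[OF y]) (use c in \<open>auto simp: Fs_def\<close>)
  with c show ?thesis by blast
qed

lemma lbd_minf: "lbd F \<Longrightarrow> lbd (minf F W)"
proof -
  assume l: "lbd F"
  then obtain c where c: "\<forall>z. (\<forall>v. 0 \<le> z $ v) \<longrightarrow> c \<le> F z" by (auto simp: lbd_def)
  have "c \<le> minf F W y" if "\<forall>v. 0 \<le> y $ v" for y
    by (rule minf_ge[OF that]) (use c in \<open>auto simp: Fs_def\<close>)
  then show ?thesis unfolding lbd_def by blast
qed

lemma lbd_add: "lbd F \<Longrightarrow> lbd G \<Longrightarrow> lbd (\<lambda>z. F z + G z)"
  unfolding lbd_def by (metis add_mono)

lemma lbd_nonneg: "(\<And>z. \<forall>v. 0 \<le> z $ v \<Longrightarrow> 0 \<le> F z) \<Longrightarrow> lbd F"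
  unfolding lbd_def by blast

lemma minf_cong: "(\<And>z. \<forall>v. 0 \<le> z $ v \<Longrightarrow> F z = G z) \<Longrightarrow> minf F W y = minf G W y"
  unfolding minf_def by (rule INF_cong) (auto simp: Fs_def)

lemma minf_mono: "\<forall>v. 0 \<le> y $ v \<Longrightarrow> lbd F \<Longrightarrow> (\<And>z. \<forall>v. 0 \<le> z $ v \<Longrightarrow> F z \<le> G z) \<Longrightarrow> minf F W y \<le> minf G W y"
  unfolding minf_def
  by (rule cINF_mono[OF Fs_ne lbd_bdd]) (auto simp: Fs_def)

lemma minf_antimono: "\<forall>v. 0 \<le> y $ v \<Longrightarrow> lbd F \<Longrightarrow> W \<subseteq> W' \<Longrightarrow> minf F W' y \<le> minf F W y"
  unfolding minf_def
  by (rule cINF_superset_mono[OF Fs_ne lbd_bdd]) (auto simp: Fs_def)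

lemma Fs_outside: "(\<And>v. v \<notin> W \<Longrightarrow> y $ v = y' $ v) \<Longrightarrow> Fs W y = Fs W y'"
  by (auto simp: Fs_def)

lemma minf_outside: "(\<And>v. v \<notin> W \<Longrightarrow> y $ v = y' $ v) \<Longrightarrow> minf F W y = minf F W y'"
  unfolding minf_def using Fs_outside by metis

lemma dep_minf: "dep (minf F W) (- W)"
  unfolding dep_def using minf_outside by (metis ComplI)

lemma dep_mono: "dep F K \<Longrightarrow> K \<subseteq> K' \<Longrightarrow> dep F K'"
  unfolding dep_def by blast

lemma minf_iter:
  assumes y: "\<forall>v. 0 \<le> y $ v" and l: "lbd F"
  shows "minf (minf F W2) W1 y = minf F (W1 \<union> W2) y"
proof (rule antisym)
  show "minf F (W1 \<union> W2) y \<le> minf (minf F W2) W1 y"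
  proof (rule minf_ge[OF y])
    fix z assume z: "z \<in> Fs W1 y"
    show "minf F (W1 \<union> W2) y \<le> minf F W2 z"
    proof (rule minf_ge)
      show "\<forall>v. 0 \<le> z $ v" using z by (simp add: Fs_def)
      fix w assume "w \<in> Fs W2 z"
      then have "w \<in> Fs (W1 \<union> W2) y" using z by (auto simp: Fs_def)
      then show "minf F (W1 \<union> W2) y \<le> F w" by (rule minf_le[OF l])
    qed
  qed
next
  show "minf (minf F W2) W1 y \<le> minf F (W1 \<union> W2) y"
  proof (rule minf_ge[OF y])
    fix w assume w: "w \<in> Fs (W1 \<union> W2) y"
    define z where "z = (\<chi> v. if v \<in> W1 then w $ v else y $ v)"
    have z: "z \<in> Fs W1 y" using w y by (auto simp: Fs_def z_def)
    have wz: "w \<in> Fs W2 z" using w by (auto simp: Fs_def z_def)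
    have "minf (minf F W2) W1 y \<le> minf F W2 z" by (rule minf_le[OF lbd_minf[OF l] z])
    also have "\<dots> \<le> F w" by (rule minf_le[OF l wz])
    finally show "minf (minf F W2) W1 y \<le> F w" .
  qed
qed

lemma INF_add_const_real:
  fixes B :: "'a \<Rightarrow> real"
  assumes ne: "S \<noteq> {}" and bdd: "bdd_below (B ` S)"
  shows "(INF z \<in> S. c + B z) = c + (INF z \<in> S. B z)"
proof (rule antisym)
  have bdd2: "bdd_below ((\<lambda>z. c + B z) ` S)"
    using bdd unfolding bdd_below_def by (metis (no_types, lifting) add_le_cancel_left image_iff)
  have "(INF z \<in> S. c + B z) - c \<le> (INF z \<in> S. B z)"
  proof (rule cINF_greatest[OF ne])
    fix z assume "z \<in> S"
    then have "(INF z \<in> S. c + B z) \<le> c + B z" by (rule cINF_lower[OF bdd2])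
    then show "(INF z \<in> S. c + B z) - c \<le> B z" by simp
  qed
  then show "(INF z \<in> S. c + B z) \<le> c + (INF z \<in> S. B z)" by simp
next
  show "c + (INF z \<in> S. B z) \<le> (INF z \<in> S. c + B z)"
  proof (rule cINF_greatest[OF ne])
    fix z assume "z \<in> S"
    then have "(INF z \<in> S. B z) \<le> B z" by (rule cINF_lower[OF bdd])
    then show "c + (INF z \<in> S. B z) \<le> c + B z" by simp
  qed
qed

lemma minf_const_add:
  assumes y: "\<forall>v. 0 \<le> y $ v" and l: "lbd B" and A: "\<And>z. z \<in> Fs W y \<Longrightarrow> A z = A y"
  shows "minf (\<lambda>z. A z + B z) W y = A y + minf B W y"
proof -
  have "minf (\<lambda>z. A z + B z) W y = (INF z \<in> Fs W y. A y + B z)"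
    unfolding minf_def by (rule INF_cong) (auto simp: A)
  also have "\<dots> = A y + minf B W y"
    unfolding minf_def by (rule INF_add_const_real[OF Fs_ne[OF y] lbd_bdd[OF l]])
  finally show ?thesis .
qed

lemma minf_indep:
  assumes y: "\<forall>v. 0 \<le> y $ v" and l: "lbd F" and d: "dep F K"
  shows "minf F W y = minf F (W \<inter> K) y"
proof (rule antisym)
  show "minf F W y \<le> minf F (W \<inter> K) y" by (rule minf_antimono[OF y l]) auto
  show "minf F (W \<inter> K) y \<le> minf F W y"
  proof (rule minf_ge[OF y])
    fix z assume z: "z \<in> Fs W y"
    define z' where "z' = (\<chi> v. if v \<in> K then z $ v else y $ v)"
    have z': "z' \<in> Fs (W \<inter> K) y" using z y by (auto simp: Fs_def z'_def)
    have "F z' = F z" using d unfolding dep_def by (auto simp: z'_def)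
    then show "minf F (W \<inter> K) y \<le> F z" using minf_le[OF l z'] by simp
  qed
qed

lemma minf_triv:
  assumes y: "\<forall>v. 0 \<le> y $ v" and d: "dep F K" and WK: "W \<inter> K = {}"
  shows "minf F W y = F y"
proof -
  have "minf F W y = (INF z \<in> Fs W y. F y)"
    unfolding minf_def
  proof (rule INF_cong)
    fix z assume "z \<in> Fs W y"
    then have "\<forall>v\<in>K. z $ v = y $ v" using WK unfolding Fs_def by auto
    then show "F z = F y" using d unfolding dep_def by blast
  qed simp
  also have "\<dots> = F y" using Fs_ne[OF y] by simp
  finally show ?thesis .
qed

lemma minf_cong_Fs: "(\<And>z. z \<in> Fs W y \<Longrightarrow> F z = G z) \<Longrightarrow> minf F W y = minf G W y"
  unfolding minf_def by (rule INF_cong) auto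

lemma minf_dep_le:
  assumes y: "\<forall>v. 0 \<le> y $ v" and y': "\<forall>v. 0 \<le> y' $ v" and l: "lbd B" and d: "dep B K"
    and eq: "\<And>v. v \<in> K \<Longrightarrow> v \<notin> W \<Longrightarrow> y $ v = y' $ v"
  shows "minf B W y \<le> minf B W y'"
proof (rule minf_ge[OF y'])
  fix z assume z: "z \<in> Fs W y'"
  define z' where "z' = (\<chi> v. if v \<in> W then z $ v else y $ v)"
  have z': "z' \<in> Fs W y" using z y by (auto simp: Fs_def z'_def)
  have "B z' = B z" using d z eq unfolding dep_def Fs_def by (auto simp: z'_def)
  then show "minf B W y \<le> B z" using minf_le[OF l z'] by simp
qed

lemma minf_dep_eq:
  assumes y: "\<forall>v. 0 \<le> y $ v" and y': "\<forall>v. 0 \<le> y' $ v" and l: "lbd B" and d: "dep B K"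
    and eq: "\<And>v. v \<in> K \<Longrightarrow> v \<notin> W \<Longrightarrow> y $ v = y' $ v"
  shows "minf B W y = minf B W y'"
  using minf_dep_le[OF y y' l d eq] minf_dep_le[OF y' y l d] eq by (metis antisym)

lemma minf_sep:
  assumes y: "\<forall>v. 0 \<le> y $ v" and lA: "lbd A" and lB: "lbd B"
    and dA: "dep A K1" and dB: "dep B K2" and disj: "K1 \<inter> K2 \<inter> W = {}"
  shows "minf (\<lambda>z. A z + B z) W y = minf A W y + minf B W y"
proof -
  have lAB: "lbd (\<lambda>z. A z + B z)" by (rule lbd_add[OF lA lB])
  have "minf (\<lambda>z. A z + B z) W y = minf (minf (\<lambda>z. A z + B z) (W - K1)) (W \<inter> K1) y"
    using minf_iter[OF y lAB, where ?W1.0="W \<inter> K1" and ?W2.0="W - K1"] by (simp add: Int_Diff_Un)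
  also have "\<dots> = minf (\<lambda>z. A z + minf B W y) (W \<inter> K1) y"
  proof (rule minf_cong_Fs)
    fix z assume zF: "z \<in> Fs (W \<inter> K1) y"
    then have z: "\<forall>v. 0 \<le> z $ v" by (simp add: Fs_def)
    have "minf (\<lambda>z. A z + B z) (W - K1) z = A z + minf B (W - K1) z"
    proof (rule minf_const_add[OF z lB])
      fix w assume "w \<in> Fs (W - K1) z"
      then show "A w = A z" using dA unfolding dep_def Fs_def by auto
    qed
    also have "minf B (W - K1) z = minf B ((W - K1) \<inter> K2) z" by (rule minf_indep[OF z lB dB])
    also have "(W - K1) \<inter> K2 = W \<inter> K2" using disj by auto
    also have "minf B (W \<inter> K2) z = minf B (W \<inter> K2) y"
      by (rule minf_dep_eq[OF z y lB dB]) (use zF disj in \<open>auto simp: Fs_def\<close>)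
    also have "minf B (W \<inter> K2) y = minf B W y" by (rule minf_indep[OF y lB dB, symmetric])
    finally show "minf (\<lambda>z. A z + B z) (W - K1) z = A z + minf B W y" .
  qed
  also have "\<dots> = minf B W y + minf A (W \<inter> K1) y"
    using minf_const_add[OF y lA, of "W \<inter> K1" "\<lambda>_. minf B W y"] by (simp add: add.commute)
  also have "minf A (W \<inter> K1) y = minf A W y" by (rule minf_indep[OF y lA dA, symmetric])
  finally show ?thesis by simp
qed


lemma walk_splice:
  assumes w: "is_walk A ps i j" and kq: "k \<le> q" and q: "q < length ps"
    and k0: "k = 0 \<Longrightarrow> ps ! q = i" and kA: "k > 0 \<Longrightarrow> A (ps ! (k - 1)) (ps ! q)"
  shows "is_walk A (take k ps @ drop q ps) i j"
proof -
  have ne: "ps \<noteq> []" and hd: "hd ps = i" and la: "last ps = j"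
    and ed: "\<And>m. Suc m < length ps \<Longrightarrow> A (ps ! m) (ps ! Suc m)"
    using w by (auto simp: is_walk_def)
  let ?qs = "take k ps @ drop q ps"
  have len: "length ?qs = k + (length ps - q)" using kq q by simp
  have nth: "?qs ! m = (if m < k then ps ! m else ps ! (m - k + q))" if "m < length ?qs" for m
    using that kq q by (auto simp: nth_append min_def) (metis add.commute)
  have "?qs \<noteq> []" using q by simp
  moreover have "hd ?qs = i"
  proof (cases "k = 0")
    case True
    then show ?thesis using k0 q by (simp add: hd_drop_conv_nth)
  next
    case False
    then have "hd ?qs = ps ! 0" using q kq ne by (simp add: hd_append hd_conv_nth)
    then show ?thesis using hd ne by (simp add: hd_conv_nth)
  qed
  moreover have "last ?qs = j" using q la by (simp add: last_drop)
  moreover have "A (?qs ! m) (?qs ! Suc m)" if m: "Suc m < length ?qs" for m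
  proof -
    have n1: "?qs ! m = (if m < k then ps ! m else ps ! (m - k + q))" using nth m by simp
    have n2: "?qs ! Suc m = (if Suc m < k then ps ! Suc m else ps ! (Suc m - k + q))" using nth m by simp
    show ?thesis
    proof (cases "Suc m < k")
      case True
      then show ?thesis using n1 n2 ed kq q by auto
    next
      case False
      show ?thesis
      proof (cases "m < k")
        case True
        with False have "m = k - 1" "k > 0" by auto
        then show ?thesis using n1 n2 kA True False by auto
      next
        case False2: False
        have "Suc (m - k + q) < length ps" using m len False2 by simp
        then have "A (ps ! (m - k + q)) (ps ! Suc (m - k + q))" by (rule ed)
        moreover have "Suc m - k + q = Suc (m - k + q)" using False2 by simp
        ultimately show ?thesis using n1 n2 False2 False by simp
      qed
    qed
  qed
  ultimately show ?thesis by (simp add: is_walk_def)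
qed

lemma sp_walk: "is_shortest_path A ps i j \<Longrightarrow> is_walk A ps i j"
  by (simp add: is_shortest_path_def)

lemma sp_noadj:
  assumes sp: "is_shortest_path A ps i j" and pq: "Suc p < q" and q: "q < length ps"
  shows "\<not> A (ps ! p) (ps ! q)"
proof
  assume a: "A (ps ! p) (ps ! q)"
  have "is_walk A (take (Suc p) ps @ drop q ps) i j"
    by (rule walk_splice[OF sp_walk[OF sp]]) (use pq q a in auto)
  then have "length ps \<le> length (take (Suc p) ps @ drop q ps)"
    using sp unfolding is_shortest_path_def by blast
  then show False using pq q by (simp add: min_def split: if_splits)
qed

lemma sp_distinct:
  assumes sp: "is_shortest_path A ps i j" and pq: "p < q" and q: "q < length ps"
  shows "ps ! p \<noteq> ps ! q"
proof
  assume e: "ps ! p = ps ! q"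
  have w: "is_walk A ps i j" using sp by (simp add: is_shortest_path_def)
  have "is_walk A (take p ps @ drop q ps) i j"
  proof (rule walk_splice[OF w])
    show "p = 0 \<Longrightarrow> ps ! q = i" using e w by (auto simp: is_walk_def hd_conv_nth)
    show "0 < p \<Longrightarrow> A (ps ! (p - 1)) (ps ! q)"
      using e w pq q unfolding is_walk_def by (metis Suc_pred' Suc_lessD less_trans_Suc)
  qed (use pq q in auto)
  then have "length ps \<le> length (take p ps @ drop q ps)"
    using sp unfolding is_shortest_path_def by blast
  then show False using pq q by (simp add: min_def split: if_splits)
qed

lemma walk_len2: "is_walk A ps i j \<Longrightarrow> i \<noteq> j \<Longrightarrow> 2 \<le> length ps"
  unfolding is_walk_def
  by (metis One_nat_def Suc_1 Suc_leI hd_conv_nth last_conv_nth le_neq_implies_less length_greater_0_conv less_one diff_Suc_1 nat_neq_iff)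

lemma sp_edge:
  assumes sp: "is_shortest_path A ps i j" and ij: "i \<noteq> j" and a: "A i j"
  shows "ps = [i, j]"
proof -
  have w: "is_walk A [i, j] i j" using a by (auto simp: is_walk_def nth_Cons split: nat.splits)
  have l2: "length ps \<le> 2" using sp w by (auto simp: is_shortest_path_def)
  have l2': "2 \<le> length ps" using walk_len2[OF sp_walk[OF sp] ij] .
  have "length ps = 2" using l2 l2' by simp
  moreover have "hd ps = i" "last ps = j" using sp by (auto simp: is_shortest_path_def is_walk_def)
  ultimately show ?thesis
    by (cases ps; cases "tl ps"; auto)
qed

lemma walk_nth_edge: "is_walk A ps i j \<Longrightarrow> Suc k < length ps \<Longrightarrow> A (ps ! k) (ps ! Suc k)"
  by (simp add: is_walk_def)

lemma walk_hd: "is_walk A ps i j \<Longrightarrow> ps ! 0 = i"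
  by (metis hd_conv_nth is_walk_def)

lemma walk_last: "is_walk A ps i j \<Longrightarrow> ps ! (length ps - 1) = j"
  by (metis last_conv_nth is_walk_def)

lemma sp_mono:
  assumes sp: "is_shortest_path A ps i j"
    and ed: "\<And>k. Suc k < length ps \<Longrightarrow> A' (ps ! k) (ps ! Suc k)"
    and sub: "\<And>a b. A' a b \<Longrightarrow> A a b"
  shows "is_shortest_path A' ps i j"
proof -
  have "is_walk A' ps i j" using sp ed by (auto simp: is_shortest_path_def is_walk_def)
  moreover have "length ps \<le> length qs" if "is_walk A' qs i j" for qs
    using that sp sub by (auto simp: is_shortest_path_def is_walk_def)
  ultimately show ?thesis by (simp add: is_shortest_path_def)
qed

lemma sp_tl:
  assumes sp: "is_shortest_path A ps i j" and l: "2 \<le> length ps"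
  shows "is_shortest_path A (tl ps) (ps ! 1) j"
proof -
  have w: "is_walk A ps i j" using sp by (simp add: is_shortest_path_def)
  have tlne: "tl ps \<noteq> []" using l by (cases ps) auto
  have "hd (tl ps) = ps ! 1" using tlne l by (simp add: hd_conv_nth nth_tl)
  moreover have "last (tl ps) = j" using tlne w by (simp add: last_tl is_walk_def)
  moreover have "\<forall>k. Suc k < length (tl ps) \<longrightarrow> A (tl ps ! k) (tl ps ! Suc k)"
    using walk_nth_edge[OF w] by (simp add: nth_tl)
  ultimately have wt: "is_walk A (tl ps) (ps ! 1) j" using tlne by (simp add: is_walk_def)
  moreover have "length (tl ps) \<le> length qs" if q: "is_walk A qs (ps ! 1) j" for qs
  proof -
    have "is_walk A (i # qs) i j"
      using q walk_nth_edge[OF w, of 0] l walk_hd[OF w] unfolding is_walk_def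
      by (auto simp: nth_Cons hd_conv_nth split: nat.splits)
    then have "length ps \<le> length (i # qs)" using sp unfolding is_shortest_path_def by blast
    then show ?thesis by simp
  qed
  ultimately show ?thesis by (simp add: is_shortest_path_def)
qed

lemma sp_rev:
  assumes sp: "is_shortest_path A ps i j" and sym: "\<And>a b. A a b \<Longrightarrow> A b a"
  shows "is_shortest_path A (rev ps) j i"
proof -
  have revw: "is_walk A (rev qs) b a" if "is_walk A qs a b" for qs a b
  proof -
    have "A (rev qs ! k) (rev qs ! Suc k)" if k: "Suc k < length qs" for k
    proof -
      have "A (qs ! (length qs - Suc (Suc k))) (qs ! Suc (length qs - Suc (Suc k)))"
        using walk_nth_edge[OF \<open>is_walk A qs a b\<close>] k by simp
      moreover have "Suc (length qs - Suc (Suc k)) = length qs - Suc k" using k by simp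
      ultimately show ?thesis using k sym by (simp add: rev_nth)
    qed
    then show ?thesis using that by (auto simp: is_walk_def hd_rev last_rev)
  qed
  show ?thesis
    using sp revw unfolding is_shortest_path_def by (metis length_rev rev_rev_ident)
qed


lemma scale_integral:
  fixes F :: "real ^ 'v::finite \<Rightarrow> ennreal" and t :: real
  assumes Fm: "F \<in> borel_measurable borel" and t: "t > 0"
  shows "(\<integral>\<^sup>+ w. F w \<partial>lborel) = ennreal (t ^ CARD('v)) * (\<integral>\<^sup>+ x. F (t *\<^sub>R x) \<partial>lborel)"
proof -
  have tn: "t \<noteq> 0" using t by simp
  have "(\<integral>\<^sup>+ w. F w \<partial>lborel) =
      (\<integral>\<^sup>+ w. F w \<partial>(density (distr lborel borel (\<lambda>x. 0 + t *\<^sub>R x)) (\<lambda>_. \<bar>t\<bar>^DIM(real ^ 'v))))"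
    using lborel_affine[OF tn, of "0 :: real ^ 'v"] by simp
  also have "\<dots> = (\<integral>\<^sup>+ x. ennreal (\<bar>t\<bar>^DIM(real ^ 'v)) * F (t *\<^sub>R x) \<partial>lborel)"
    using Fm by (simp add: nn_integral_density nn_integral_distr)
  also have "\<dots> = ennreal (t ^ CARD('v)) * (\<integral>\<^sup>+ x. F (t *\<^sub>R x) \<partial>lborel)"
    using t Fm by (simp add: nn_integral_cmult)
  finally show ?thesis .
qed

lemma exp_neg_lim: "(c::real) > 0 \<Longrightarrow> (\<lambda>n. exp (- (real n * c))) \<longlonglongrightarrow> 0"
proof -
  assume c: "c > 0"
  have "(\<lambda>n. exp (-c) ^ n) \<longlonglongrightarrow> 0" by (rule LIMSEQ_power_zero) (use c in simp)
  moreover have "exp (- (real n * c)) = exp (-c) ^ n" for n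
    by (metis exp_of_nat_mult mult_minus_right)
  ultimately show ?thesis by simp
qed

lemma gauge_lower:
  fixes M :: "'s measure" and X :: "'s \<Rightarrow> real ^ ('v::finite)" and f g :: "real ^ 'v \<Rightarrow> real"
  assumes P: "prob_space M"
    and D: "distributed M lborel X (\<lambda>y. ennreal (f y))"
    and Dk: "\<And>k. distributed M lborel (\<lambda>\<omega>. X \<omega> $ k) (exponential_density 1)"
    and G: "is_gauge f g"
    and y: "\<forall>v. 0 \<le> y $ v"
  shows "y $ u \<le> g y"
proof (rule ccontr)
  assume "\<not> y $ u \<le> g y"
  interpret P: prob_space M by (rule P)
  define a where "a = y $ u"
  have ga: "g y < a" using \<open>\<not> y $ u \<le> g y\<close> a_def by simp
  have gcont: "continuous_on nonneg_orthant g" and gnn: "\<And>x. x \<in> nonneg_orthant \<Longrightarrow> 0 \<le> g x"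
    and glim: "\<And>x xt. x \<in> nonneg_orthant \<Longrightarrow> (\<forall>t. xt t \<in> nonneg_orthant) \<Longrightarrow> (xt \<longlongrightarrow> x) at_top \<Longrightarrow>
        (\<forall>\<^sub>F t in at_top. 0 < f (t *\<^sub>R xt t)) \<and> ((\<lambda>t. - ln (f (t *\<^sub>R xt t)) / t) \<longlongrightarrow> g x) at_top"
    using G unfolding is_gauge_def by blast+
  have yO: "y \<in> nonneg_orthant" using y by simp
  have a0: "0 < a" using gnn[OF yO] ga by simp
  define \<delta> where "\<delta> = (a - g y) / 2"
  have d0: "0 < \<delta>" using ga by (simp add: \<delta>_def)
  obtain r where r0: "r > 0" and r: "\<And>w. w \<in> nonneg_orthant \<Longrightarrow> dist w y < r \<Longrightarrow> dist (g w) (g y) < \<delta>"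
    using gcont yO d0 unfolding continuous_on_iff by metis
  define e :: "real ^ 'v" where "e = (\<chi> k. 1)"
  define \<rho> where "\<rho> = min r (\<delta>/2) / (1 + norm e)"
  have rho0: "0 < \<rho>" using r0 d0 by (simp add: \<rho>_def add_pos_nonneg)
  have ne0: "1 + norm e > 0" by (simp add: add_pos_nonneg)
  have rho1: "\<rho> * (1 + norm e) = min r (\<delta>/2)" using ne0 unfolding \<rho>_def by (simp add: field_simps)
  define c where "c = y + \<rho> *\<^sub>R e"
  define B where "B = ball c \<rho>"
  have Bprop: "w \<in> nonneg_orthant \<and> g w < a - \<delta> \<and> a - \<delta>/2 < w $ u" if w: "w \<in> B" for w
  proof -
    have wc: "norm (w - c) < \<rho>" using w by (simp add: B_def dist_norm norm_minus_commute)
    have "\<bar>(w - c) $ k\<bar> < \<rho>" for k using component_le_norm_cart[of "w - c" k] wc by linarith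
    then have wk: "y $ k < w $ k" for k by (simp add: c_def e_def abs_less_iff)
    have wO: "w \<in> nonneg_orthant" using wk y by (auto intro: less_imp_le order.strict_trans1)
    have "dist w y \<le> dist w c + dist c y" by (rule dist_triangle)
    also have "dist c y = \<rho> * norm e" using rho0 by (simp add: c_def dist_norm)
    finally have "dist w y < \<rho> * (1 + norm e)" using wc by (simp add: dist_norm algebra_simps)
    then have dwy: "dist w y < min r (\<delta>/2)" using rho1 by simp
    have "dist (g w) (g y) < \<delta>" using r[OF wO] dwy by simp
    then have "g w - g y < \<delta>" by (simp add: dist_real_def abs_less_iff)
    then have g1: "g w < a - \<delta>" by (simp add: \<delta>_def field_simps)
    have "\<bar>(w - y) $ u\<bar> < \<delta>/2" using component_le_norm_cart[of "w - y" u] dwy by (simp add: dist_norm)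
    then have h: "\<bar>w $ u - y $ u\<bar> < \<delta>/2" by simp
    have "a - \<delta>/2 < w $ u" using h abs_ge_minus_self[of "w $ u - y $ u"] unfolding a_def by linarith
    with wO g1 show ?thesis by blast
  qed
  have fm[measurable]: "(\<lambda>y. ennreal (f y)) \<in> borel_measurable borel"
    using distributed_borel_measurable[OF D] by simp
  have Bm[measurable]: "B \<in> sets borel" by (simp add: B_def)
  define b where "b = a - \<delta>/2"
  have b0: "0 < b" using a0 d0 gnn[OF yO] by (simp add: b_def \<delta>_def)
  define Gn where "Gn n v = ennreal (exp (real n * (a - \<delta>))) * ennreal (f (real n *\<^sub>R v)) * indicator B v" for n v
  have Gm[measurable]: "Gn n \<in> borel_measurable lborel" for n
    unfolding Gn_def by measurable
  have upper: "(\<integral>\<^sup>+ v. Gn n v \<partial>lborel) \<le> ennreal (exp (- (real n * (\<delta>/2))))" if n: "n \<ge> 1" for n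
  proof -
    define t where "t = real n"
    have t1: "1 \<le> t" using n by (simp add: t_def)
    have t0: "0 < t" using t1 by simp
    define S where "S = {w :: real ^ 'v. (1/t) *\<^sub>R w \<in> B}"
    have Sm[measurable]: "S \<in> sets borel" unfolding S_def by measurable
    define I where "I = (\<integral>\<^sup>+ v. ennreal (f (t *\<^sub>R v)) * indicator B v \<partial>lborel)"
    have "(\<integral>\<^sup>+ w. ennreal (f w) * indicator S w \<partial>lborel)
        = ennreal (t ^ CARD('v)) * (\<integral>\<^sup>+ x. ennreal (f (t *\<^sub>R x)) * indicator S (t *\<^sub>R x) \<partial>lborel)"
      by (rule scale_integral[OF _ t0]) measurable
    also have "(\<lambda>x. indicator S (t *\<^sub>R x) :: ennreal) = indicator B"
      using t0 by (auto simp: S_def indicator_def fun_eq_iff)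
    finally have eq1: "(\<integral>\<^sup>+ w. ennreal (f w) * indicator S w \<partial>lborel) = ennreal (t ^ CARD('v)) * I"
      by (simp add: I_def)
    have eq2: "emeasure M (X -` S \<inter> space M) = (\<integral>\<^sup>+ w. ennreal (f w) * indicator S w \<partial>lborel)"
      by (rule distributed_emeasure[OF D]) simp
    have sub: "X -` S \<inter> space M \<subseteq> {\<omega> \<in> space M. t * b < X \<omega> $ u}"
    proof
      fix \<omega> assume "\<omega> \<in> X -` S \<inter> space M"
      then have xB: "(1/t) *\<^sub>R X \<omega> \<in> B" and om: "\<omega> \<in> space M" by (auto simp: S_def)
      have "b < ((1/t) *\<^sub>R X \<omega>) $ u" using Bprop[OF xB] by (simp add: b_def)
      then have "b < X \<omega> $ u / t" by simp
      then have "t * b < X \<omega> $ u" using t0 by (simp add: field_simps)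
      with om show "\<omega> \<in> {\<omega> \<in> space M. t * b < X \<omega> $ u}" by simp
    qed
    have Xm: "(\<lambda>\<omega>. X \<omega> $ u) \<in> borel_measurable M"
      using distributed_measurable[OF Dk[of u]] by simp
    have setm: "{\<omega> \<in> space M. t * b < X \<omega> $ u} \<in> sets M" using Xm by measurable
    have pr: "measure M {\<omega> \<in> space M. t * b < X \<omega> $ u} = exp (- (t * b) * 1)"
      using prob_space.exponential_distributedD_gt[OF P Dk[of u], of "t * b"] t0 b0 by simp
    have "emeasure M (X -` S \<inter> space M) \<le> emeasure M {\<omega> \<in> space M. t * b < X \<omega> $ u}"
      by (rule emeasure_mono[OF sub setm])
    also have "\<dots> = ennreal (exp (- (t * b)))"
      using pr P.emeasure_eq_measure by simp
    finally have "ennreal (t ^ CARD('v)) * I \<le> ennreal (exp (- (t * b)))" using eq1 eq2 by simp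
    moreover have "I \<le> ennreal (t ^ CARD('v)) * I"
    proof -
      have "1 \<le> t ^ CARD('v)" using t1 by simp
      then have "(1::ennreal) \<le> ennreal (t ^ CARD('v))" by simp
      then show ?thesis using mult_right_mono[of 1 "ennreal (t ^ CARD('v))" I] by simp
    qed
    ultimately have Ib: "I \<le> ennreal (exp (- (t * b)))" by (rule order_trans[rotated])
    have "(\<integral>\<^sup>+ v. Gn n v \<partial>lborel) = ennreal (exp (t * (a - \<delta>))) * I"
      unfolding Gn_def I_def t_def by (subst nn_integral_cmult[symmetric]) (auto simp: mult.assoc)
    also have "\<dots> \<le> ennreal (exp (t * (a - \<delta>))) * ennreal (exp (- (t * b)))"
      by (rule mult_left_mono[OF Ib]) simp
    also have "\<dots> = ennreal (exp (t * (a - \<delta>)) * exp (- (t * b)))"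
      by (simp add: ennreal_mult)
    also have "exp (t * (a - \<delta>)) * exp (- (t * b)) = exp (- (real n * (\<delta>/2)))"
      by (simp add: exp_add[symmetric] b_def t_def algebra_simps)
    finally show ?thesis .
  qed
  have lower: "1 \<le> liminf (\<lambda>n. Gn n v)" if v: "v \<in> B" for v
  proof -
    have vO: "v \<in> nonneg_orthant" and gv: "g v < a - \<delta>" using Bprop[OF v] by auto
    have L: "(\<forall>\<^sub>F t in at_top. 0 < f (t *\<^sub>R v)) \<and> ((\<lambda>t. - ln (f (t *\<^sub>R v)) / t) \<longlongrightarrow> g v) at_top"
      using glim[of v "\<lambda>_. v"] vO by simp
    have ev1: "\<forall>\<^sub>F t in at_top. - ln (f (t *\<^sub>R v)) / t < a - \<delta>"
      using order_tendstoD(2)[OF conjunct2[OF L] gv] .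
    have ev: "\<forall>\<^sub>F t in at_top. 1 < exp (t * (a - \<delta>)) * f (t *\<^sub>R v)"
      using ev1 conjunct1[OF L] eventually_gt_at_top[of 0]
    proof eventually_elim
      case (elim t)
      then have "- ln (f (t *\<^sub>R v)) < t * (a - \<delta>)" by (simp add: field_simps)
      then have "- (t * (a - \<delta>)) < ln (f (t *\<^sub>R v))" by simp
      then have "exp (- (t * (a - \<delta>))) < f (t *\<^sub>R v)"
        using elim by (metis exp_less_cancel_iff exp_ln)
      then have "exp (t * (a - \<delta>)) * exp (- (t * (a - \<delta>))) < exp (t * (a - \<delta>)) * f (t *\<^sub>R v)"
        by simp
      then show ?case by (simp add: exp_minus)
    qed
    have evn: "\<forall>\<^sub>F n in sequentially. 1 < exp (real n * (a - \<delta>)) * f (real n *\<^sub>R v)"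
      using filterlim_real_sequentially[unfolded filterlim_iff] ev by blast
    show ?thesis
    proof (rule Liminf_bounded)
      show "\<forall>\<^sub>F n in sequentially. 1 \<le> Gn n v"
        using evn
      proof eventually_elim
        case (elim n)
        have "f (real n *\<^sub>R v) > 0"
        proof (rule ccontr)
          assume "\<not> f (real n *\<^sub>R v) > 0"
          then have "exp (real n * (a - \<delta>)) * f (real n *\<^sub>R v) \<le> 0"
            by (intro mult_nonneg_nonpos) auto
          with elim show False by simp
        qed
        then have "Gn n v = ennreal (exp (real n * (a - \<delta>)) * f (real n *\<^sub>R v))"
          using v by (simp add: Gn_def ennreal_mult)
        then show ?case using elim by simp
      qed
    qed
  qed
  have "emeasure lborel B = (\<integral>\<^sup>+ v. indicator B v \<partial>lborel)" by simp
  also have "\<dots> \<le> (\<integral>\<^sup>+ v. liminf (\<lambda>n. Gn n v) \<partial>lborel)"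
    by (rule nn_integral_mono) (auto simp: indicator_def lower)
  also have "\<dots> \<le> liminf (\<lambda>n. \<integral>\<^sup>+ v. Gn n v \<partial>lborel)"
    by (rule nn_integral_liminf) simp
  also have "\<dots> \<le> liminf (\<lambda>n. ennreal (exp (- (real n * (\<delta>/2)))))"
    by (rule Liminf_mono) (use upper in \<open>auto simp: eventually_sequentially\<close>)
  also have "\<dots> = 0"
  proof (rule lim_imp_Liminf)
    show "(\<lambda>n. ennreal (exp (- (real n * (\<delta>/2))))) \<longlonglongrightarrow> 0"
      using tendsto_ennrealI[OF exp_neg_lim[of "\<delta>/2"]] d0 by simp
  qed simp
  finally have "emeasure lborel B = 0" by simp
  moreover have "emeasure lborel B > 0"
    using rho0 by (simp add: B_def emeasure_ball)
  ultimately show False by simp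
qed


definition TT :: "(nat \<Rightarrow> real ^ 'v \<Rightarrow> real) \<Rightarrow> (nat \<Rightarrow> 'v) \<Rightarrow> nat \<Rightarrow> real ^ 'v \<Rightarrow> real" where
  "TT h s n z = (\<Sum>l<n. h l z) - (\<Sum>l\<in>{1..<n}. z $ s l)"

definition VV :: "'v set list \<Rightarrow> nat \<Rightarrow> 'v set" where
  "VV Cs n = (\<Union>l<n. Cs ! l)"

definition Adj :: "'v set list \<Rightarrow> nat \<Rightarrow> 'v \<Rightarrow> 'v \<Rightarrow> bool" where
  "Adj Cs n a b \<longleftrightarrow> a \<noteq> b \<and> (\<exists>l<n. a \<in> Cs ! l \<and> b \<in> Cs ! l)"

lemma TT_0[simp]: "TT h s 0 z = 0" by (simp add: TT_def)
lemma TT_1: "TT h s (Suc 0) z = h 0 z" by (simp add: TT_def)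
lemma TT_Suc: "1 \<le> n \<Longrightarrow> TT h s (Suc n) z = TT h s n z + (h n z - z $ s n)"
  by (simp add: TT_def sum.atLeastLessThan_Suc)

lemma Adj_sym: "Adj Cs n a b \<Longrightarrow> Adj Cs n b a" by (auto simp: Adj_def)

lemma VV_Suc: "VV Cs (Suc n) = VV Cs n \<union> Cs ! n"
  by (auto simp: VV_def less_Suc_eq)

locale absm0 =
  fixes Cs :: "'v::finite set list" and h :: "nat \<Rightarrow> real ^ 'v \<Rightarrow> real" and s :: "nat \<Rightarrow> 'v"
  assumes sep: "\<And>k. 1 \<le> k \<Longrightarrow> k < length Cs \<Longrightarrow> separator Cs k = {s k}"
    and hdep: "\<And>l. l < length Cs \<Longrightarrow> dep (h l) (Cs ! l)"
    and hge: "\<And>l z u. l < length Cs \<Longrightarrow> u \<in> Cs ! l \<Longrightarrow> \<forall>v. 0 \<le> z $ v \<Longrightarrow> z $ u \<le> h l z"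
    and hnn: "\<And>l z. l < length Cs \<Longrightarrow> \<forall>v. 0 \<le> z $ v \<Longrightarrow> 0 \<le> h l z"
begin

abbreviation "N \<equiv> length Cs"
abbreviation "T \<equiv> TT h s"

lemma s_in: "1 \<le> k \<Longrightarrow> k < N \<Longrightarrow> s k \<in> Cs ! k"
  using sep[of k] by (auto simp: separator_def)

lemma s_earlier: "1 \<le> k \<Longrightarrow> k < N \<Longrightarrow> \<exists>r<k. s k \<in> Cs ! r"
  using sep[of k] by (auto simp: separator_def)

lemma s_VV: "1 \<le> k \<Longrightarrow> k < N \<Longrightarrow> s k \<in> VV Cs k"
  using s_earlier[of k] by (auto simp: VV_def)

lemma C_int_VV: "1 \<le> k \<Longrightarrow> k < N \<Longrightarrow> Cs ! k \<inter> VV Cs k = {s k}"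
  using sep[of k] by (simp add: separator_def VV_def)

lemma T_step_ge: "n < N \<Longrightarrow> \<forall>v. 0 \<le> z $ v \<Longrightarrow> T n z \<le> T (Suc n) z"
proof -
  assume n: "n < N" and z: "\<forall>v. 0 \<le> z $ v"
  show ?thesis
  proof (cases "n = 0")
    case True
    then show ?thesis using hnn[OF n z] by (simp add: TT_1)
  next
    case False
    then have "1 \<le> n" by simp
    then show ?thesis using TT_Suc[of n h s z] hge[OF n s_in[OF \<open>1 \<le> n\<close> n] z] by simp
  qed
qed

lemma T_mono: "m \<le> n \<Longrightarrow> n \<le> N \<Longrightarrow> \<forall>v. 0 \<le> z $ v \<Longrightarrow> T m z \<le> T n z"
proof (induction n rule: dec_induct)
  case (step n)
  then show ?case using T_step_ge[of n z] by simp
qed simp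

lemma T_nonneg: "n \<le> N \<Longrightarrow> \<forall>v. 0 \<le> z $ v \<Longrightarrow> 0 \<le> T n z"
  using T_mono[of 0 n z] by simp

lemma T_lbd: "n \<le> N \<Longrightarrow> lbd (T n)"
  by (rule lbd_nonneg) (rule T_nonneg)

lemma T_prefix: "r < N \<Longrightarrow> u \<in> Cs ! r \<Longrightarrow> \<forall>v. 0 \<le> z $ v \<Longrightarrow> z $ u \<le> T (Suc r) z"
proof (induction r arbitrary: u rule: less_induct)
  case (less r)
  show ?case
  proof (cases "r = 0")
    case True
    then show ?thesis using hge[OF less(2) less(3) less(4)] by (simp add: TT_1)
  next
    case False
    then have r1: "1 \<le> r" by simp
    obtain r' where r': "r' < r" "s r \<in> Cs ! r'" using s_earlier[OF r1 less(2)] by blast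
    have "z $ s r \<le> T (Suc r') z" using less(1)[OF r'(1) _ r'(2) less(4)] less(2) r'(1) by simp
    also have "\<dots> \<le> T r z" using T_mono[of "Suc r'" r z] r'(1) less(2) less(4) by simp
    finally have "z $ s r \<le> T r z" .
    then show ?thesis using TT_Suc[OF r1, of h s z] hge[OF less(2) less(3) less(4)] by simp
  qed
qed

lemma T_sep: "1 \<le> r \<Longrightarrow> r < N \<Longrightarrow> \<forall>v. 0 \<le> z $ v \<Longrightarrow> z $ s r \<le> T r z"
proof -
  assume r1: "1 \<le> r" and r: "r < N" and z: "\<forall>v. 0 \<le> z $ v"
  obtain r' where r': "r' < r" "s r \<in> Cs ! r'" using s_earlier[OF r1 r] by blast
  have "z $ s r \<le> T (Suc r') z" using T_prefix[of r' "s r" z] r' r z by simp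
  also have "\<dots> \<le> T r z" using T_mono[of "Suc r'" r z] r' r z by simp
  finally show ?thesis .
qed

lemma T_two: "r < k \<Longrightarrow> k < N \<Longrightarrow> \<forall>v. 0 \<le> z $ v \<Longrightarrow> h r z + (h k z - z $ s k) \<le> T N z"
proof -
  assume rk: "r < k" and k: "k < N" and z: "\<forall>v. 0 \<le> z $ v"
  have k1: "1 \<le> k" using rk by simp
  have hr: "h r z \<le> T (Suc r) z"
  proof (cases "r = 0")
    case True then show ?thesis by (simp add: TT_1)
  next
    case False
    then have r1: "1 \<le> r" by simp
    have "z $ s r \<le> T r z" using T_sep[OF r1 _ z] rk k by simp
    then show ?thesis using TT_Suc[OF r1, of h s z] by simp
  qed
  also have "\<dots> \<le> T k z" using T_mono[of "Suc r" k z] rk k z by simp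
  finally have "h r z + (h k z - z $ s k) \<le> T (Suc k) z" using TT_Suc[OF k1, of h s z] by simp
  also have "\<dots> \<le> T N z" using T_mono[of "Suc k" N z] k z by simp
  finally show ?thesis .
qed

lemma T_dep: "n \<le> N \<Longrightarrow> dep (T n) (VV Cs n)"
  unfolding dep_def
proof (intro allI impI)
  fix y z :: "real ^ 'v"
  assume n: "n \<le> N" and a: "\<forall>v\<in>VV Cs n. y $ v = z $ v"
  have "h l y = h l z" if "l < n" for l
  proof -
    have "\<forall>v\<in>Cs ! l. y $ v = z $ v" using a that by (auto simp: VV_def)
    then show ?thesis using hdep[of l] that n unfolding dep_def by auto
  qed
  moreover have "y $ s l = z $ s l" if "l \<in> {1..<n}" for l
    using a s_in[of l] that n by (auto simp: VV_def)
  ultimately show "T n y = T n z" unfolding TT_def by (metis (no_types, lifting) atLeastLessThan_iff lessThan_iff sum.cong)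
qed

end


fun PP :: "('v \<Rightarrow> 'v \<Rightarrow> real ^ 'v \<Rightarrow> real) \<Rightarrow> 'v list \<Rightarrow> real ^ 'v \<Rightarrow> real" where
  "PP ge [] z = 0"
| "PP ge [a] z = 0"
| "PP ge [a, b] z = ge a b z"
| "PP ge (a # b # c # r) z = ge a b z - z $ b + PP ge (b # c # r) z"

lemma PP_cons2: "zs \<noteq> [] \<Longrightarrow> PP ge (a # b # zs) z = ge a b z - z $ b + PP ge (b # zs) z"
  by (cases zs) auto

lemma PP_nonneg:
  assumes lb: "\<And>a b z. \<forall>v. 0 \<le> z $ v \<Longrightarrow> z $ a \<le> ge a b z"
    and sym: "\<And>a b. ge a b = ge b a" and z: "\<forall>v. 0 \<le> z $ v"
  shows "0 \<le> PP ge ps z"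
proof (induction ps rule: induct_list012)
  case (3 x y zs)
  show ?case
  proof (cases "zs = []")
    case True
    have "0 \<le> z $ x" using z by simp
    then show ?thesis using lb[OF z, of x y] True by simp
  next
    case False
    have "z $ y \<le> ge x y z" using lb[OF z, of y x] sym by simp
    then show ?thesis using PP_cons2[OF False] 3(2) by simp
  qed
qed auto

lemma PP_dep:
  fixes ge :: "'v \<Rightarrow> 'v \<Rightarrow> real ^ 'v \<Rightarrow> real"
  assumes d: "\<And>a b. dep (ge a b) {a, b}"
  shows "dep (PP ge ps) (set ps)"
proof (induction ps rule: induct_list012)
  case (3 x y zs)
  show ?case
  proof (cases "zs = []")
    case True
    show ?thesis unfolding dep_def
    proof (intro allI impI)
      fix u w :: "real ^ 'v" assume a: "\<forall>v\<in>set (x # y # zs). u $ v = w $ v"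
      then have "\<forall>v\<in>{x, y}. u $ v = w $ v" by simp
      then have "ge x y u = ge x y w" using d[of x y] unfolding dep_def by blast
      then show "PP ge (x # y # zs) u = PP ge (x # y # zs) w" using True by simp
    qed
  next
    case False
    show ?thesis unfolding dep_def
    proof (intro allI impI)
      fix u w :: "real ^ 'v" assume a: "\<forall>v\<in>set (x # y # zs). u $ v = w $ v"
      have "\<forall>v\<in>{x, y}. u $ v = w $ v" using a by simp
      then have "ge x y u = ge x y w" using d[of x y] unfolding dep_def by blast
      moreover have "PP ge (y # zs) u = PP ge (y # zs) w"
      proof -
        have "\<forall>v\<in>set (y # zs). u $ v = w $ v" using a by simp
        then show ?thesis using 3(2) unfolding dep_def by blast
      qed
      moreover have "u $ y = w $ y" using a by simp
      ultimately show "PP ge (x # y # zs) u = PP ge (x # y # zs) w" using PP_cons2[OF False] by simp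
    qed
  qed
qed (auto simp: dep_def)

lemma PP_snoc:
  "2 \<le> length xs \<Longrightarrow> PP ge (xs @ [b]) z = PP ge xs z + ge (last xs) b z - z $ last xs"
proof (induction xs rule: induct_list012)
  case (3 x y zs)
  show ?case
  proof (cases "zs = []")
    case True
    then show ?thesis by simp
  next
    case False
    have "PP ge (x # y # zs @ [b]) z = ge x y z - z $ y + PP ge (y # zs @ [b]) z"
      by (rule PP_cons2) simp
    also have "PP ge (y # zs @ [b]) z = PP ge (y # zs) z + ge (last (y # zs)) b z - z $ last (y # zs)"
      using 3(2) False by (cases zs) auto
    finally show ?thesis using PP_cons2[OF False] False by simp
  qed
qed auto

lemma PP_rev:
  assumes sym: "\<And>a b. ge a b = ge b a"
  shows "PP ge (rev ps) z = PP ge ps z"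
proof (induction ps rule: induct_list012)
  case (3 x y zs)
  show ?case
  proof (cases "zs = []")
    case True
    then show ?thesis using sym by simp
  next
    case False
    have "PP ge (rev (x # y # zs)) z = PP ge (rev (y # zs) @ [x]) z" by simp
    also have "\<dots> = PP ge (rev (y # zs)) z + ge (last (rev (y # zs))) x z - z $ last (rev (y # zs))"
      by (rule PP_snoc) (use False in \<open>cases zs; auto\<close>)
    also have "\<dots> = PP ge (y # zs) z + ge y x z - z $ y" using 3(2) by simp
    finally show ?thesis using PP_cons2[OF False] sym by simp
  qed
qed auto

lemma PP_index:
  "PP ge ps z = (\<Sum>k\<in>{1..length ps - 1}. ge (ps ! (k - 1)) (ps ! k) z) - (\<Sum>k\<in>{1..<length ps - 1}. z $ (ps ! k))"
proof (induction ps rule: induct_list012)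
  case (3 x y zs)
  show ?case
  proof (cases "zs = []")
    case True
    then show ?thesis by simp
  next
    case False
    define L where "L = length zs"
    have L1: "1 \<le> L" using False by (simp add: L_def Suc_leI)
    let ?ps = "x # y # zs"
    let ?F = "\<lambda>k. ge (?ps ! (k - 1)) (?ps ! k) z"
    let ?G = "\<lambda>k. z $ (?ps ! k)"
    have "(\<Sum>k\<in>{1..Suc L}. ?F k) = ?F 1 + (\<Sum>k\<in>{Suc 1..Suc L}. ?F k)"
      by (rule sum.atLeast_Suc_atMost) simp
    also have "(\<Sum>k\<in>{Suc 1..Suc L}. ?F k) = (\<Sum>k\<in>{1..L}. ?F (Suc k))"
      by (rule sum.shift_bounds_cl_Suc_ivl)
    finally have s1: "(\<Sum>k\<in>{1..Suc L}. ?F k) = ge x y z + (\<Sum>k\<in>{1..L}. ge ((y # zs) ! (k - 1)) ((y # zs) ! k) z)"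
      using L1 by (simp add: nth_Cons')
    have "(\<Sum>k\<in>{1..<Suc L}. ?G k) = ?G 1 + (\<Sum>k\<in>{Suc 1..<Suc L}. ?G k)"
      by (rule sum.atLeast_Suc_lessThan) (use L1 in simp)
    also have "(\<Sum>k\<in>{Suc 1..<Suc L}. ?G k) = (\<Sum>k\<in>{1..<L}. ?G (Suc k))"
      by (rule sum.shift_bounds_Suc_ivl)
    finally have s2: "(\<Sum>k\<in>{1..<Suc L}. ?G k) = z $ y + (\<Sum>k\<in>{1..<L}. z $ ((y # zs) ! k))"
      by simp
    have "PP ge ?ps z = ge x y z - z $ y + PP ge (y # zs) z" by (rule PP_cons2[OF False])
    also have "PP ge (y # zs) z = (\<Sum>k\<in>{1..L}. ge ((y # zs) ! (k - 1)) ((y # zs) ! k) z) - (\<Sum>k\<in>{1..<L}. z $ ((y # zs) ! k))"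
      using 3(2) by (simp add: L_def)
    finally show ?thesis using s1 s2 by (simp add: L_def)
  qed
qed auto


locale absm = absm0 Cs h s for Cs :: "'v::finite set list" and h s +
  fixes ge :: "'v \<Rightarrow> 'v \<Rightarrow> real ^ 'v \<Rightarrow> real" and S :: "'v set"
  assumes hS: "\<And>l u y. l < length Cs \<Longrightarrow> u \<in> Cs ! l \<Longrightarrow> u \<in> S \<Longrightarrow> \<forall>v. 0 \<le> y $ v \<Longrightarrow> minf (h l) (- {u}) y = y $ u"
    and sS: "\<And>k. 1 \<le> k \<Longrightarrow> k < length Cs \<Longrightarrow> s k \<in> S"
    and hge2: "\<And>l a b y. l < length Cs \<Longrightarrow> a \<in> Cs ! l \<Longrightarrow> b \<in> Cs ! l \<Longrightarrow> a \<noteq> b \<Longrightarrow> \<forall>v. 0 \<le> y $ v \<Longrightarrow>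
       minf (h l) (- {a, b}) y = ge a b y"
    and gedep: "\<And>a b. dep (ge a b) {a, b}"
    and gesym: "\<And>a b. ge a b = ge b a"
    and gelb: "\<And>a b z. \<forall>v. 0 \<le> z $ v \<Longrightarrow> z $ a \<le> ge a b z"
begin

lemma PP_two: "PP ge [a, b] = ge a b"
  by (auto simp: fun_eq_iff)

lemma PP_lbd: "lbd (PP ge ps)"
  by (rule lbd_nonneg) (rule PP_nonneg[OF gelb gesym])

lemma ge_lbd: "lbd (ge a b)"
  by (rule lbd_nonneg) (metis gelb order_trans)

lemma h_lbd: "l < N \<Longrightarrow> lbd (h l)"
  by (rule lbd_nonneg) (rule hnn)

lemma h_minus_lbd: "1 \<le> l \<Longrightarrow> l < N \<Longrightarrow> lbd (\<lambda>z. h l z - z $ s l)"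
  by (rule lbd_nonneg) (use hge s_in in force)

lemma minf_h_minus:
  assumes l: "1 \<le> l" "l < N" and z: "\<forall>v. 0 \<le> z $ v" and W: "s l \<notin> W"
  shows "minf (\<lambda>z. h l z - z $ s l) W z = minf (h l) W z - z $ s l"
proof -
  have "minf (\<lambda>z. h l z - z $ s l) W z = minf (\<lambda>w. (- w $ s l) + h l w) W z" by simp
  also have "\<dots> = - z $ s l + minf (h l) W z"
    by (rule minf_const_add[OF z h_lbd[OF l(2)]]) (use W in \<open>auto simp: Fs_def\<close>)
  finally show ?thesis by simp
qed

lemma ge_triv: "\<forall>v. 0 \<le> y $ v \<Longrightarrow> minf (ge a b) (- {a, b}) y = ge a b y"
  by (rule minf_triv[OF _ gedep]) auto

context
  fixes n assumes n1: "1 \<le> n" and nN: "n < N"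
begin

definition "Nw = Cs ! n - {s n}"

lemma Nw_VV: "Nw \<inter> VV Cs n = {}"
  using C_int_VV[OF n1 nN] by (auto simp: Nw_def)

lemma adj_Nw: "w \<in> Nw \<Longrightarrow> Adj Cs (Suc n) w b \<Longrightarrow> b \<in> Cs ! n"
  using Nw_VV unfolding Adj_def VV_def by (auto simp: less_Suc_eq)

lemma adj_down: "Adj Cs (Suc n) a b \<Longrightarrow> a \<notin> Nw \<Longrightarrow> b \<notin> Nw \<Longrightarrow> Adj Cs n a b"
  unfolding Adj_def Nw_def by (auto simp: less_Suc_eq)

lemma adj_C: "a \<in> Cs ! n \<Longrightarrow> b \<in> Cs ! n \<Longrightarrow> a \<noteq> b \<Longrightarrow> Adj Cs (Suc n) a b"
  unfolding Adj_def by auto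

lemma adj_up: "Adj Cs n a b \<Longrightarrow> Adj Cs (Suc n) a b"
  unfolding Adj_def using less_Suc_eq by blast

lemma sn_S: "s n \<in> S" using sS[OF n1 nN] .
lemma sn_C: "s n \<in> Cs ! n" using s_in[OF n1 nN] .
lemma sn_VV: "s n \<in> VV Cs n" using s_VV[OF n1 nN] .
lemma sn_Nw: "s n \<notin> Nw" by (simp add: Nw_def)

lemma T_Suc_eq: "T (Suc n) = (\<lambda>z. T n z + (h n z - z $ s n))"
  using TT_Suc[OF n1] by auto

lemma h_Nw: "\<forall>v. 0 \<le> z $ v \<Longrightarrow> minf (h n) Nw z = z $ s n"
proof -
  assume z: "\<forall>v. 0 \<le> z $ v"
  have "minf (h n) Nw z = minf (h n) (Nw \<inter> Cs ! n) z" by (rule minf_indep[OF z h_lbd[OF nN] hdep[OF nN]])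
  also have "Nw \<inter> Cs ! n = - {s n} \<inter> Cs ! n" by (auto simp: Nw_def)
  also have "minf (h n) (- {s n} \<inter> Cs ! n) z = minf (h n) (- {s n}) z"
    by (rule minf_indep[OF z h_lbd[OF nN] hdep[OF nN], symmetric])
  also have "\<dots> = z $ s n" by (rule hS[OF nN sn_C sn_S z])
  finally show ?thesis .
qed

lemma leaf_elim:
  assumes W: "Nw \<subseteq> W" and y: "\<forall>v. 0 \<le> y $ v"
  shows "minf (T (Suc n)) W y = minf (T n) W y"
proof -
  have lS: "lbd (T (Suc n))" using T_lbd nN by simp
  have lT: "lbd (T n)" using T_lbd nN by simp
  have "minf (T (Suc n)) W y = minf (minf (T (Suc n)) Nw) (W - Nw) y"
    using minf_iter[OF y lS, where ?W1.0="W - Nw" and ?W2.0="Nw"] W by (simp add: Un_absorb2)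
  also have "\<dots> = minf (T n) (W - Nw) y"
  proof (rule minf_cong)
    fix z :: "real ^ 'v" assume z: "\<forall>v. 0 \<le> z $ v"
    have "minf (T (Suc n)) Nw z = minf (\<lambda>w. T n w + (h n w - w $ s n)) Nw z" by (simp add: T_Suc_eq)
    also have "\<dots> = T n z + minf (\<lambda>w. h n w - w $ s n) Nw z"
    proof (rule minf_const_add[OF z h_minus_lbd[OF n1 nN]])
      fix w assume "w \<in> Fs Nw z"
      then have "\<forall>v\<in>VV Cs n. w $ v = z $ v" using Nw_VV by (auto simp: Fs_def)
      then show "T n w = T n z" using T_dep[of n] nN unfolding dep_def by auto
    qed
    also have "minf (\<lambda>w. h n w - w $ s n) Nw z = minf (h n) Nw z - z $ s n"
      by (rule minf_h_minus[OF n1 nN z sn_Nw])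
    also have "\<dots> = 0" using h_Nw[OF z] by simp
    finally show "minf (T (Suc n)) Nw z = T n z" by simp
  qed
  also have "\<dots> = minf (T n) ((W - Nw) \<inter> VV Cs n) y" by (rule minf_indep[OF y lT T_dep]) (use nN in simp)
  also have "(W - Nw) \<inter> VV Cs n = W \<inter> VV Cs n" using Nw_VV by auto
  also have "minf (T n) (W \<inter> VV Cs n) y = minf (T n) W y" by (rule minf_indep[OF y lT T_dep, symmetric]) (use nN in simp)
  finally show ?thesis .
qed

lemma leaf_split:
  assumes W: "s n \<in> W" and y: "\<forall>v. 0 \<le> y $ v"
  shows "minf (T (Suc n)) W y =
    minf (\<lambda>z. minf (T n) (W - {s n}) z + (minf (h n) (W - {s n}) z - z $ s n)) {s n} y"
proof -
  have lS: "lbd (T (Suc n))" using T_lbd nN by simp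
  have lT: "lbd (T n)" using T_lbd nN by simp
  have "minf (T (Suc n)) W y = minf (minf (T (Suc n)) (W - {s n})) {s n} y"
    using minf_iter[OF y lS, where ?W1.0="{s n}" and ?W2.0="W - {s n}"] W by (simp add: insert_absorb)
  also have "\<dots> = minf (\<lambda>z. minf (T n) (W - {s n}) z + (minf (h n) (W - {s n}) z - z $ s n)) {s n} y"
  proof (rule minf_cong)
    fix z :: "real ^ 'v" assume z: "\<forall>v. 0 \<le> z $ v"
    have "minf (T (Suc n)) (W - {s n}) z = minf (\<lambda>w. T n w + (h n w - w $ s n)) (W - {s n}) z"
      by (simp add: T_Suc_eq)
    also have "\<dots> = minf (T n) (W - {s n}) z + minf (\<lambda>w. h n w - w $ s n) (W - {s n}) z"
    proof (rule minf_sep[OF z lT h_minus_lbd[OF n1 nN]])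
      show "dep (T n) (VV Cs n)" using T_dep nN by simp
      show "dep (\<lambda>w. h n w - w $ s n) (Cs ! n)"
        using hdep[OF nN] sn_C unfolding dep_def by auto
      show "VV Cs n \<inter> Cs ! n \<inter> (W - {s n}) = {}" using C_int_VV[OF n1 nN] by auto
    qed
    also have "minf (\<lambda>w. h n w - w $ s n) (W - {s n}) z = minf (h n) (W - {s n}) z - z $ s n"
      by (rule minf_h_minus[OF n1 nN z]) simp
    finally show "minf (T (Suc n)) (W - {s n}) z =
      minf (T n) (W - {s n}) z + (minf (h n) (W - {s n}) z - z $ s n)" .
  qed
  finally show ?thesis .
qed


lemma sp_len: "is_shortest_path A ps i j \<Longrightarrow> i \<noteq> j \<Longrightarrow> 2 \<le> length ps"
  using walk_len2 sp_walk by metis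

lemma step_a:
  assumes IHa: "\<And>i y. i \<in> VV Cs n \<Longrightarrow> i \<in> S \<Longrightarrow> \<forall>v. 0 \<le> y $ v \<Longrightarrow> minf (T n) (- {i}) y = y $ i"
    and i: "i \<in> VV Cs (Suc n)" "i \<in> S" and y: "\<forall>v. 0 \<le> y $ v"
  shows "minf (T (Suc n)) (- {i}) y = y $ i"
proof (cases "i \<in> Nw")
  case False
  then have iV: "i \<in> VV Cs n" using i(1) sn_VV by (auto simp: VV_Suc Nw_def)
  have "minf (T (Suc n)) (- {i}) y = minf (T n) (- {i}) y" by (rule leaf_elim) (use False y in auto)
  also have "\<dots> = y $ i" by (rule IHa[OF iV i(2) y])
  finally show ?thesis .
next
  case True
  have iC: "i \<in> Cs ! n" and isn: "i \<noteq> s n" using True by (auto simp: Nw_def)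
  have iVV: "i \<notin> VV Cs n" using True Nw_VV by auto
  have lT: "lbd (T n)" using T_lbd nN by simp
  have "minf (T (Suc n)) (- {i}) y =
    minf (\<lambda>z. minf (T n) (- {i} - {s n}) z + (minf (h n) (- {i} - {s n}) z - z $ s n)) {s n} y"
    by (rule leaf_split) (use isn y in auto)
  also have "\<dots> = minf (minf (h n) (- {i} - {s n})) {s n} y"
  proof (rule minf_cong)
    fix z :: "real ^ 'v" assume z: "\<forall>v. 0 \<le> z $ v"
    have "minf (T n) (- {i} - {s n}) z = minf (T n) ((- {i} - {s n}) \<inter> VV Cs n) z"
      by (rule minf_indep[OF z lT T_dep]) (use nN in simp)
    also have "(- {i} - {s n}) \<inter> VV Cs n = - {s n} \<inter> VV Cs n" using iVV by auto
    also have "minf (T n) (- {s n} \<inter> VV Cs n) z = minf (T n) (- {s n}) z"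
      by (rule minf_indep[OF z lT T_dep, symmetric]) (use nN in simp)
    also have "\<dots> = z $ s n" by (rule IHa[OF sn_VV sn_S z])
    finally show "minf (T n) (- {i} - {s n}) z + (minf (h n) (- {i} - {s n}) z - z $ s n) =
        minf (h n) (- {i} - {s n}) z" by simp
  qed
  also have "\<dots> = minf (h n) ({s n} \<union> (- {i} - {s n})) y" by (rule minf_iter[OF y h_lbd[OF nN]])
  also have "{s n} \<union> (- {i} - {s n}) = - {i}" using isn by auto
  also have "minf (h n) (- {i}) y = y $ i" by (rule hS[OF nN iC i(2) y])
  finally show ?thesis .
qed


lemma T_marg_s:
  assumes IHa: "minf (T n) (- {s n}) z = z $ s n"
    and X: "X \<inter> VV Cs n = {}" and z: "\<forall>v. 0 \<le> z $ v"
  shows "minf (T n) (- X - {s n}) z = z $ s n"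
proof -
  have lT: "lbd (T n)" using T_lbd nN by simp
  have "minf (T n) (- X - {s n}) z = minf (T n) ((- X - {s n}) \<inter> VV Cs n) z"
    by (rule minf_indep[OF z lT T_dep]) (use nN in simp)
  also have "(- X - {s n}) \<inter> VV Cs n = - {s n} \<inter> VV Cs n" using X by auto
  also have "minf (T n) (- {s n} \<inter> VV Cs n) z = minf (T n) (- {s n}) z"
    by (rule minf_indep[OF z lT T_dep, symmetric]) (use nN in simp)
  also have "\<dots> = z $ s n" by (rule IHa)
  finally show ?thesis .
qed

lemma case1:
  assumes IHb: "\<And>i j ps y. i \<noteq> j \<Longrightarrow> is_shortest_path (Adj Cs n) ps i j \<Longrightarrow> \<forall>v. 0 \<le> y $ v \<Longrightarrow>
      minf (T n) (- {i, j}) y = minf (PP ge ps) (- {i, j}) y"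
    and iN: "i \<notin> Nw" and jN: "j \<notin> Nw" and ij: "i \<noteq> j"
    and sp: "is_shortest_path (Adj Cs (Suc n)) ps i j" and y: "\<forall>v. 0 \<le> y $ v"
  shows "minf (T (Suc n)) (- {i, j}) y = minf (PP ge ps) (- {i, j}) y"
proof -
  have w: "is_walk (Adj Cs (Suc n)) ps i j" using sp_walk[OF sp] .
  have avoid: "ps ! p \<notin> Nw" if p: "p < length ps" for p
  proof
    assume pN: "ps ! p \<in> Nw"
    have p0: "p \<noteq> 0"
    proof
      assume "p = 0" then show False using walk_hd[OF w] iN pN by simp
    qed
    have pl: "p \<noteq> length ps - 1" using walk_last[OF w] jN pN by auto
    have e1: "Adj Cs (Suc n) (ps ! (p - 1)) (ps ! p)"
      using walk_nth_edge[OF w, of "p - 1"] p p0 by simp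
    have e2: "Adj Cs (Suc n) (ps ! p) (ps ! Suc p)"
      using walk_nth_edge[OF w, of p] p pl by simp
    have a: "ps ! (p - 1) \<in> Cs ! n" using adj_Nw[OF pN Adj_sym[OF e1]] .
    have b: "ps ! Suc p \<in> Cs ! n" using adj_Nw[OF pN e2] .
    have d: "ps ! (p - 1) \<noteq> ps ! Suc p" using sp_distinct[OF sp, of "p - 1" "Suc p"] p pl by simp
    have "\<not> Adj Cs (Suc n) (ps ! (p - 1)) (ps ! Suc p)"
      using sp_noadj[OF sp, of "p - 1" "Suc p"] p pl p0 by simp
    then show False using adj_C[OF a b d] by simp
  qed
  have sp': "is_shortest_path (Adj Cs n) ps i j"
  proof (rule sp_mono[OF sp])
    fix k assume k: "Suc k < length ps"
    show "Adj Cs n (ps ! k) (ps ! Suc k)"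
      using adj_down[OF walk_nth_edge[OF w k]] avoid k by simp
  qed (rule adj_up)
  have "minf (T (Suc n)) (- {i, j}) y = minf (T n) (- {i, j}) y" by (rule leaf_elim) (use iN jN y in auto)
  also have "\<dots> = minf (PP ge ps) (- {i, j}) y" by (rule IHb[OF ij sp' y])
  finally show ?thesis .
qed

lemma case4:
  assumes IHa: "\<And>i y. i \<in> VV Cs n \<Longrightarrow> i \<in> S \<Longrightarrow> \<forall>v. 0 \<le> y $ v \<Longrightarrow> minf (T n) (- {i}) y = y $ i"
    and iN: "i \<in> Nw" and jN: "j \<in> Nw" and ij: "i \<noteq> j"
    and sp: "is_shortest_path (Adj Cs (Suc n)) ps i j" and y: "\<forall>v. 0 \<le> y $ v"
  shows "minf (T (Suc n)) (- {i, j}) y = minf (PP ge ps) (- {i, j}) y"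
proof -
  have iC: "i \<in> Cs ! n" "i \<noteq> s n" and jC: "j \<in> Cs ! n" "j \<noteq> s n" using iN jN by (auto simp: Nw_def)
  have ps: "ps = [i, j]" by (rule sp_edge[OF sp ij adj_C[OF iC(1) jC(1) ij]])
  have X: "{i, j} \<inter> VV Cs n = {}" using iN jN Nw_VV by auto
  have "minf (T (Suc n)) (- {i, j}) y =
    minf (\<lambda>z. minf (T n) (- {i, j} - {s n}) z + (minf (h n) (- {i, j} - {s n}) z - z $ s n)) {s n} y"
    by (rule leaf_split) (use iC jC y in auto)
  also have "\<dots> = minf (minf (h n) (- {i, j} - {s n})) {s n} y"
  proof (rule minf_cong)
    fix z :: "real ^ 'v" assume z: "\<forall>v. 0 \<le> z $ v"
    show "minf (T n) (- {i, j} - {s n}) z + (minf (h n) (- {i, j} - {s n}) z - z $ s n) =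
        minf (h n) (- {i, j} - {s n}) z" using T_marg_s[OF IHa[OF sn_VV sn_S z] X z] by linarith
  qed
  also have "\<dots> = minf (h n) ({s n} \<union> (- {i, j} - {s n})) y" by (rule minf_iter[OF y h_lbd[OF nN]])
  also have "{s n} \<union> (- {i, j} - {s n}) = - {i, j}" using iC jC by auto
  also have "minf (h n) (- {i, j}) y = ge i j y" by (rule hge2[OF nN iC(1) jC(1) ij y])
  also have "\<dots> = minf (PP ge ps) (- {i, j}) y" using ge_triv[OF y] ps PP_two by simp
  finally show ?thesis .
qed


lemma case2:
  assumes IHa: "\<And>i y. i \<in> VV Cs n \<Longrightarrow> i \<in> S \<Longrightarrow> \<forall>v. 0 \<le> y $ v \<Longrightarrow> minf (T n) (- {i}) y = y $ i"
    and IHb: "\<And>i j ps y. i \<noteq> j \<Longrightarrow> is_shortest_path (Adj Cs n) ps i j \<Longrightarrow> \<forall>v. 0 \<le> y $ v \<Longrightarrow>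
      minf (T n) (- {i, j}) y = minf (PP ge ps) (- {i, j}) y"
    and iN: "i \<in> Nw" and jN: "j \<notin> Nw" and ij: "i \<noteq> j"
    and sp: "is_shortest_path (Adj Cs (Suc n)) ps i j" and y: "\<forall>v. 0 \<le> y $ v"
  shows "minf (T (Suc n)) (- {i, j}) y = minf (PP ge ps) (- {i, j}) y"
proof -
  have w: "is_walk (Adj Cs (Suc n)) ps i j" using sp_walk[OF sp] .
  have L: "2 \<le> length ps" using sp_len[OF sp ij] .
  have iC: "i \<in> Cs ! n" and isn: "i \<noteq> s n" using iN by (auto simp: Nw_def)
  have iVV: "i \<notin> VV Cs n" using iN Nw_VV by auto
  have lT: "lbd (T n)" using T_lbd nN by simp
  have hd0: "ps ! 0 = i" using walk_hd[OF w] .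
  have far: "ps ! p \<notin> Cs ! n" if p: "2 \<le> p" "p < length ps" for p
  proof
    assume pC: "ps ! p \<in> Cs ! n"
    have d: "i \<noteq> ps ! p" using sp_distinct[OF sp, of 0 p] p hd0 by simp
    have "\<not> Adj Cs (Suc n) (ps ! 0) (ps ! p)" using sp_noadj[OF sp, of 0 p] p by simp
    then show False using adj_C[OF iC pC d] hd0 by simp
  qed
  have e0: "Adj Cs (Suc n) i (ps ! 1)" using walk_nth_edge[OF w, of 0] L hd0 by simp
  have p1C: "ps ! 1 \<in> Cs ! n" using adj_Nw[OF iN e0] .
  show ?thesis
  proof (cases "length ps = 2")
    case True
    have j1: "ps ! 1 = j" using walk_last[OF w] True by simp
    have jsn: "j = s n" using p1C j1 jN by (auto simp: Nw_def)
    have ps: "ps = [i, s n]" using sp_edge[OF sp ij adj_C[OF iC _ ij]] p1C j1 jsn by simp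
    have "minf (T (Suc n)) (- {i, s n}) y = minf (\<lambda>w. T n w + (h n w - w $ s n)) (- {i, s n}) y"
      by (simp add: T_Suc_eq)
    also have "\<dots> = minf (T n) (- {i, s n}) y + minf (\<lambda>w. h n w - w $ s n) (- {i, s n}) y"
    proof (rule minf_sep[OF y lT h_minus_lbd[OF n1 nN]])
      show "dep (T n) (VV Cs n)" using T_dep nN by simp
      show "dep (\<lambda>w. h n w - w $ s n) (Cs ! n)"
        using hdep[OF nN] sn_C unfolding dep_def by auto
      show "VV Cs n \<inter> Cs ! n \<inter> - {i, s n} = {}" using C_int_VV[OF n1 nN] by auto
    qed
    also have "minf (T n) (- {i, s n}) y = y $ s n"
    proof -
      have eq: "- {i, s n} = - {i} - {s n}" by auto
      have X1: "{i} \<inter> VV Cs n = {}" using iVV by auto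
      show ?thesis by (subst eq) (rule T_marg_s[OF IHa[OF sn_VV sn_S y] X1 y])
    qed
    also have "minf (\<lambda>w. h n w - w $ s n) (- {i, s n}) y = minf (h n) (- {i, s n}) y - y $ s n"
      by (rule minf_h_minus[OF n1 nN y]) simp
    also have "minf (h n) (- {i, s n}) y = ge i (s n) y" by (rule hge2[OF nN iC sn_C isn y])
    also have "ge i (s n) y = minf (PP ge ps) (- {i, s n}) y" using ge_triv[OF y] ps PP_two by simp
    finally show ?thesis using jsn by simp
  next
    case False
    then have L3: "3 \<le> length ps" using L by simp
    have e1: "Adj Cs (Suc n) (ps ! 1) (ps ! 2)" using walk_nth_edge[OF w, of 1] L3 by (simp add: numeral_2_eq_2)
    have p2: "ps ! 2 \<notin> Cs ! n" using far[of 2] L3 by simp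
    have p1N: "ps ! 1 \<notin> Nw" using adj_Nw[OF _ e1] p2 by blast
    have p1: "ps ! 1 = s n" using p1C p1N by (auto simp: Nw_def)
    have jlast: "ps ! (length ps - 1) = j" using walk_last[OF w] .
    have jC: "j \<notin> Cs ! n" using far[of "length ps - 1"] L3 jlast by simp
    have jsn: "j \<noteq> s n" using jC sn_C by auto
    obtain rest where ps: "ps = i # s n # rest" and rest: "rest \<noteq> []"
    proof -
      obtain a b rest where "ps = a # b # rest" using L by (cases ps; cases "tl ps") auto
      moreover have "rest \<noteq> []" using L3 calculation by auto
      ultimately show ?thesis using that hd0 p1 by simp
    qed
    have tl: "tl ps = s n # rest" using ps by simp
    have spt: "is_shortest_path (Adj Cs (Suc n)) (tl ps) (s n) j" using sp_tl[OF sp L] p1 by simp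
    have tavoid: "tl ps ! k \<notin> Nw" if k: "k < length (tl ps)" for k
    proof (cases k)
      case 0 then show ?thesis using tl sn_Nw by simp
    next
      case (Suc k')
      have "ps ! Suc k \<notin> Cs ! n" using far[of "Suc k"] k Suc by simp
      then show ?thesis using k by (simp add: nth_tl Nw_def)
    qed
    have wt: "is_walk (Adj Cs (Suc n)) (tl ps) (s n) j" using sp_walk[OF spt] .
    have spt': "is_shortest_path (Adj Cs n) (tl ps) (s n) j"
    proof (rule sp_mono[OF spt])
      fix k assume k: "Suc k < length (tl ps)"
      show "Adj Cs n (tl ps ! k) (tl ps ! Suc k)"
        using adj_down[OF walk_nth_edge[OF wt k]] tavoid k by simp
    qed (rule adj_up)
    have inot: "i \<notin> set (tl ps)"
    proof
      assume "i \<in> set (tl ps)"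
      then obtain k where k: "k < length (tl ps)" "tl ps ! k = i" by (auto simp: in_set_conv_nth)
      then have "ps ! Suc k = ps ! 0" using hd0 by (simp add: nth_tl)
      moreover have "Suc k < length ps" using k(1) by simp
      ultimately show False using sp_distinct[OF sp, of 0 "Suc k"] by simp
    qed
    have lP: "lbd (PP ge (tl ps))" by (rule PP_lbd)
    have PPd: "dep (PP ge (tl ps)) (set (tl ps))" by (rule PP_dep[OF gedep])
    have PPeq: "PP ge ps = (\<lambda>w. (ge i (s n) w - w $ s n) + PP ge (tl ps) w)"
      using PP_cons2[OF rest] ps tl by (auto simp: fun_eq_iff)
    have "minf (T (Suc n)) (- {i, j}) y =
      minf (\<lambda>z. minf (T n) (- {i, j} - {s n}) z + (minf (h n) (- {i, j} - {s n}) z - z $ s n)) {s n} y"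
      by (rule leaf_split) (use isn jsn y in auto)
    also have "\<dots> = minf (minf (PP ge ps) (- {i, j} - {s n})) {s n} y"
    proof (rule minf_cong)
      fix z :: "real ^ 'v" assume z: "\<forall>v. 0 \<le> z $ v"
      have "minf (T n) (- {i, j} - {s n}) z = minf (T n) ((- {i, j} - {s n}) \<inter> VV Cs n) z"
        by (rule minf_indep[OF z lT T_dep]) (use nN in simp)
      also have "(- {i, j} - {s n}) \<inter> VV Cs n = - {s n, j} \<inter> VV Cs n" using iVV by auto
      also have "minf (T n) (- {s n, j} \<inter> VV Cs n) z = minf (T n) (- {s n, j}) z"
        by (rule minf_indep[OF z lT T_dep, symmetric]) (use nN in simp)
      also have "\<dots> = minf (PP ge (tl ps)) (- {s n, j}) z" by (rule IHb[OF jsn[symmetric] spt' z])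
      finally have A1: "minf (T n) (- {i, j} - {s n}) z = minf (PP ge (tl ps)) (- {s n, j}) z" .
      have "minf (h n) (- {i, j} - {s n}) z = minf (h n) ((- {i, j} - {s n}) \<inter> Cs ! n) z"
        by (rule minf_indep[OF z h_lbd[OF nN] hdep[OF nN]])
      also have "(- {i, j} - {s n}) \<inter> Cs ! n = - {i, s n} \<inter> Cs ! n" using jC by auto
      also have "minf (h n) (- {i, s n} \<inter> Cs ! n) z = minf (h n) (- {i, s n}) z"
        by (rule minf_indep[OF z h_lbd[OF nN] hdep[OF nN], symmetric])
      also have "\<dots> = ge i (s n) z" by (rule hge2[OF nN iC sn_C isn z])
      finally have A2: "minf (h n) (- {i, j} - {s n}) z = ge i (s n) z" .
      have "minf (PP ge ps) (- {i, j} - {s n}) z =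
          minf (\<lambda>w. (ge i (s n) w - w $ s n) + PP ge (tl ps) w) (- {i, j} - {s n}) z"
        by (simp add: PPeq)
      also have "\<dots> = (ge i (s n) z - z $ s n) + minf (PP ge (tl ps)) (- {i, j} - {s n}) z"
      proof (rule minf_const_add[OF z lP])
        fix w assume wF: "w \<in> Fs (- {i, j} - {s n}) z"
        then have "\<forall>v\<in>{i, s n}. w $ v = z $ v" by (auto simp: Fs_def)
        then have "ge i (s n) w = ge i (s n) z" using gedep[of i "s n"] unfolding dep_def by blast
        moreover have "w $ s n = z $ s n" using wF by (auto simp: Fs_def)
        ultimately show "ge i (s n) w - w $ s n = ge i (s n) z - z $ s n" by simp
      qed
      also have "minf (PP ge (tl ps)) (- {i, j} - {s n}) z = minf (PP ge (tl ps)) ((- {i, j} - {s n}) \<inter> set (tl ps)) z"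
        by (rule minf_indep[OF z lP PPd])
      also have "(- {i, j} - {s n}) \<inter> set (tl ps) = - {s n, j} \<inter> set (tl ps)" using inot by auto
      also have "minf (PP ge (tl ps)) (- {s n, j} \<inter> set (tl ps)) z = minf (PP ge (tl ps)) (- {s n, j}) z"
        by (rule minf_indep[OF z lP PPd, symmetric])
      finally have A3: "minf (PP ge ps) (- {i, j} - {s n}) z =
          (ge i (s n) z - z $ s n) + minf (PP ge (tl ps)) (- {s n, j}) z" .
      show "minf (T n) (- {i, j} - {s n}) z + (minf (h n) (- {i, j} - {s n}) z - z $ s n) =
          minf (PP ge ps) (- {i, j} - {s n}) z" using A1 A2 A3 by simp
    qed
    also have "\<dots> = minf (PP ge ps) ({s n} \<union> (- {i, j} - {s n})) y" by (rule minf_iter[OF y PP_lbd])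
    also have "{s n} \<union> (- {i, j} - {s n}) = - {i, j}" using isn jsn by auto
    finally show ?thesis .
  qed
qed


lemma step_b:
  assumes IHa: "\<And>i y. i \<in> VV Cs n \<Longrightarrow> i \<in> S \<Longrightarrow> \<forall>v. 0 \<le> y $ v \<Longrightarrow> minf (T n) (- {i}) y = y $ i"
    and IHb: "\<And>i j ps y. i \<noteq> j \<Longrightarrow> is_shortest_path (Adj Cs n) ps i j \<Longrightarrow> \<forall>v. 0 \<le> y $ v \<Longrightarrow>
      minf (T n) (- {i, j}) y = minf (PP ge ps) (- {i, j}) y"
    and ij: "i \<noteq> j" and sp: "is_shortest_path (Adj Cs (Suc n)) ps i j" and y: "\<forall>v. 0 \<le> y $ v"
  shows "minf (T (Suc n)) (- {i, j}) y = minf (PP ge ps) (- {i, j}) y"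
proof (cases "i \<in> Nw")
  case iN: True
  show ?thesis
  proof (cases "j \<in> Nw")
    case True show ?thesis by (rule case4[OF _ iN True ij sp y]) (use IHa in blast)
  next
    case False show ?thesis by (rule case2[OF _ _ iN False ij sp y]) (use IHa IHb in blast)+
  qed
next
  case iN: False
  show ?thesis
  proof (cases "j \<in> Nw")
    case True
    have spr: "is_shortest_path (Adj Cs (Suc n)) (rev ps) j i" by (rule sp_rev[OF sp Adj_sym])
    have "minf (T (Suc n)) (- {j, i}) y = minf (PP ge (rev ps)) (- {j, i}) y"
      by (rule case2[OF _ _ True iN ij[symmetric] spr y]) (use IHa IHb in blast)+
    moreover have "PP ge (rev ps) = PP ge ps" using PP_rev[OF gesym] by auto
    ultimately show ?thesis by (simp add: insert_commute)
  next
    case False show ?thesis by (rule case1[OF _ iN False ij sp y]) (use IHb in blast)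
  qed
qed

end


lemma main_ind:
  assumes "1 \<le> n"
  shows "n \<le> N \<longrightarrow>
    (\<forall>i y. i \<in> VV Cs n \<longrightarrow> i \<in> S \<longrightarrow> (\<forall>v. 0 \<le> y $ v) \<longrightarrow> minf (T n) (- {i}) y = y $ i) \<and>
    (\<forall>i j ps y. i \<noteq> j \<longrightarrow> is_shortest_path (Adj Cs n) ps i j \<longrightarrow> (\<forall>v. 0 \<le> y $ v) \<longrightarrow>
      minf (T n) (- {i, j}) y = minf (PP ge ps) (- {i, j}) y)"
  using assms
proof (induction n rule: nat_induct_at_least)
  case base
  have T1: "T 1 = h 0" by (auto simp: TT_1 fun_eq_iff)
  have V1: "VV Cs 1 = Cs ! 0" by (simp add: VV_def lessThan_Suc)
  show ?case
  proof (intro impI conjI allI)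
    fix i and y :: "real ^ 'v" assume N1: "1 \<le> N" and a: "i \<in> VV Cs 1" "i \<in> S" "\<forall>v. 0 \<le> y $ v"
    have "0 < length Cs" using N1 by linarith
    then show "minf (T 1) (- {i}) y = y $ i" using hS[of 0 i y] T1 V1 a by simp
  next
    fix i j ps and y :: "real ^ 'v"
    assume N1: "1 \<le> N" and ij: "i \<noteq> j" and sp: "is_shortest_path (Adj Cs 1) ps i j" and y: "\<forall>v. 0 \<le> y $ v"
    have w: "is_walk (Adj Cs 1) ps i j" using sp_walk[OF sp] .
    have L: "2 \<le> length ps" using walk_len2[OF w ij] .
    have "Adj Cs 1 (ps ! 0) (ps ! 1)" using walk_nth_edge[OF w, of 0] L by simp
    then have iC: "i \<in> Cs ! 0" using walk_hd[OF w] by (simp add: Adj_def)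
    have "Adj Cs 1 (ps ! (length ps - 2)) (ps ! (length ps - 1))"
      using walk_nth_edge[OF w, of "length ps - 2"] L by (simp add: Suc_diff_Suc numeral_2_eq_2)
    then have jC: "j \<in> Cs ! 0" using walk_last[OF w] by (simp add: Adj_def)
    have ps: "ps = [i, j]" by (rule sp_edge[OF sp ij]) (use iC jC ij in \<open>auto simp: Adj_def\<close>)
    have "minf (T 1) (- {i, j}) y = minf (h 0) (- {i, j}) y" using T1 by simp
    also have "\<dots> = ge i j y" by (rule hge2[OF _ iC jC ij y]) (use N1 in linarith)
    also have "\<dots> = minf (PP ge ps) (- {i, j}) y" using ge_triv[OF y] ps PP_two by simp
    finally show "minf (T 1) (- {i, j}) y = minf (PP ge ps) (- {i, j}) y" .
  qed
next
  case (Suc n)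
  show ?case
  proof (intro impI conjI allI)
    fix i and y :: "real ^ 'v" assume SN: "Suc n \<le> N" and a: "i \<in> VV Cs (Suc n)" "i \<in> S" "\<forall>v. 0 \<le> y $ v"
    then have nN: "n < N" by simp
    have IH: "(\<forall>i y. i \<in> VV Cs n \<longrightarrow> i \<in> S \<longrightarrow> (\<forall>v. 0 \<le> y $ v) \<longrightarrow> minf (T n) (- {i}) y = y $ i)"
      using Suc.IH nN by simp
    show "minf (T (Suc n)) (- {i}) y = y $ i"
      by (rule step_a[OF Suc.hyps nN _ a]) (use IH in blast)
  next
    fix i j ps and y :: "real ^ 'v"
    assume SN: "Suc n \<le> N" and b: "i \<noteq> j" "is_shortest_path (Adj Cs (Suc n)) ps i j" "\<forall>v. 0 \<le> y $ v"
    then have nN: "n < N" by simp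
    have IH: "(\<forall>i y. i \<in> VV Cs n \<longrightarrow> i \<in> S \<longrightarrow> (\<forall>v. 0 \<le> y $ v) \<longrightarrow> minf (T n) (- {i}) y = y $ i) \<and>
      (\<forall>i j ps y. i \<noteq> j \<longrightarrow> is_shortest_path (Adj Cs n) ps i j \<longrightarrow> (\<forall>v. 0 \<le> y $ v) \<longrightarrow>
      minf (T n) (- {i, j}) y = minf (PP ge ps) (- {i, j}) y)" using Suc.IH nN by simp
    show "minf (T (Suc n)) (- {i, j}) y = minf (PP ge ps) (- {i, j}) y"
      by (rule step_b[OF Suc.hyps nN _ _ b]) (use IH in blast)+
  qed
qed

end


lemma max_clique_exists:
  fixes E :: "'v::finite \<Rightarrow> 'v \<Rightarrow> bool"
  assumes c: "is_clique E C0"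
  shows "\<exists>C. maximal_clique E C \<and> C0 \<subseteq> C"
proof -
  let ?A = "{C. is_clique E C \<and> C0 \<subseteq> C}"
  have "finite ?A" by simp
  moreover have "C0 \<in> ?A" using c by simp
  ultimately obtain m where m: "m \<in> ?A" "\<forall>b\<in>?A. m \<le> b \<longrightarrow> m = b"
    using finite_has_maximal2[of ?A C0] by blast
  have "maximal_clique E m" unfolding maximal_clique_def
  proof (intro conjI allI impI)
    show "is_clique E m" using m(1) by simp
    fix C' assume "is_clique E C' \<and> m \<subseteq> C'"
    then have "C' \<in> ?A" using m(1) by auto
    then show "C' = m" using m(2) \<open>is_clique E C' \<and> m \<subseteq> C'\<close> by auto
  qed
  then show ?thesis using m(1) by blast
qed

lemma mg_eq: "\<forall>v. 0 \<le> y $ v \<Longrightarrow> marg_gauge g J y = minf g (- J) y"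
proof -
  assume y: "\<forall>v. 0 \<le> y $ v"
  have "{x. (\<forall>j\<in>J. x $ j = y $ j) \<and> (\<forall>k. k \<notin> J \<longrightarrow> 0 \<le> x $ k)} = Fs (- J) y"
  proof (intro set_eqI iffI)
    fix x assume x: "x \<in> {x. (\<forall>j\<in>J. x $ j = y $ j) \<and> (\<forall>k. k \<notin> J \<longrightarrow> 0 \<le> x $ k)}"
    have "0 \<le> x $ v" for v
    proof (cases "v \<in> J")
      case True then show ?thesis using x y by auto
    next
      case False then show ?thesis using x by auto
    qed
    then show "x \<in> Fs (- J) y" using x by (auto simp: Fs_def)
  next
    fix x assume "x \<in> Fs (- J) y"
    then show "x \<in> {x. (\<forall>j\<in>J. x $ j = y $ j) \<and> (\<forall>k. k \<notin> J \<longrightarrow> 0 \<le> x $ k)}" by (auto simp: Fs_def)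
  qed
  then show ?thesis unfolding marg_gauge_def minf_def by simp
qed

lemma mg_dep: "dep (marg_gauge g J) J"
  unfolding dep_def
proof (intro allI impI)
  fix y z :: "real ^ 'a" assume a: "\<forall>v\<in>J. y $ v = z $ v"
  have "{x. (\<forall>j\<in>J. x $ j = y $ j) \<and> (\<forall>k. k \<notin> J \<longrightarrow> 0 \<le> x $ k)} =
        {x. (\<forall>j\<in>J. x $ j = z $ j) \<and> (\<forall>k. k \<notin> J \<longrightarrow> 0 \<le> x $ k)}" using a by auto
  then show "marg_gauge g J y = marg_gauge g J z" unfolding marg_gauge_def by simp
qed

theorem lemma2:
  fixes M :: "'s measure"
    and X :: "'s \<Rightarrow> real ^ ('v::finite)"
    and f g :: "real ^ 'v \<Rightarrow> real"
    and E :: "'v \<Rightarrow> 'v \<Rightarrow> bool"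
    and Cs :: "'v set list"
    and i j :: 'v
    and ps :: "'v list"
    and x :: "real ^ 'v"
  assumes "prob_space M"
    and "distributed M lborel X (\<lambda>y. ennreal (f y))"
    and "\<And>k. distributed M lborel (\<lambda>\<omega>. X \<omega> $ k) (exponential_density 1)"
    and "is_gauge f g"
    and "block_geometric_model E Cs g"
    and "i \<noteq> j"
    and "is_shortest_path E ps i j"
    and "0 \<le> x $ i" and "0 \<le> x $ j"
  shows "marg_gauge g {i, j} x =
    (INF y \<in> {y. y $ i = x $ i \<and> y $ j = x $ j \<and> (\<forall>k. 0 \<le> y $ k)}.
       (\<Sum>k\<in>{1..length ps - 1}. marg_gauge g {ps ! (k - 1), ps ! k} y)
       - (\<Sum>k\<in>{1..<length ps - 1}. y $ (ps ! k)))"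
proof -
  note P = assms(1) and D = assms(2) and Dk = assms(3) and G = assms(4) and BM = assms(5)
    and ij = assms(6) and sp = assms(7)
  have gl: "\<And>y u. \<forall>v. 0 \<le> y $ v \<Longrightarrow> y $ u \<le> g y"
    by (rule gauge_lower[OF P D Dk G]) auto
  have gnn: "\<And>y. \<forall>v. 0 \<le> y $ v \<Longrightarrow> 0 \<le> g y"
    using G unfolding is_gauge_def by simp
  have lg: "lbd g" by (rule lbd_nonneg) (rule gnn)
  have bg: "block_graph E Cs" and model: "\<And>x. x \<in> nonneg_orthant \<Longrightarrow>
        g x = (\<Sum>k<length Cs. marg_gauge g (Cs ! k) x)
              - (\<Sum>k\<in>{1..<length Cs}. \<Sum>v\<in>separator Cs k. x $ v)"
    using BM unfolding block_geometric_model_def by auto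
  have Esym: "\<And>a b. E a b \<Longrightarrow> E b a" and Eirr: "\<And>a. \<not> E a a"
    and setCs: "set Cs = {C. maximal_clique E C}"
    and seps: "\<And>k. 1 \<le> k \<Longrightarrow> k < length Cs \<Longrightarrow> \<exists>v. separator Cs k = {v}"
    using bg unfolding block_graph_def by auto
  define s where "s k = (THE v. separator Cs k = {v})" for k
  have sep: "separator Cs k = {s k}" if k: "1 \<le> k" "k < length Cs" for k
  proof -
    obtain v where v: "separator Cs k = {v}" using seps[OF k] by blast
    then have "s k = v" unfolding s_def by (rule the_equality) (use v in auto)
    then show ?thesis using v by simp
  qed
  define h where "h l = marg_gauge g (Cs ! l)" for l
  define ge where "ge a b = marg_gauge g {a, b}" for a b
  define S where "S = s ` {1..<length Cs}"
  have mg_ge: "z $ u \<le> marg_gauge g J z" if z: "\<forall>v. 0 \<le> z $ v" and u: "u \<in> J" for z u J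
  proof -
    have "z $ u \<le> minf g (- J) z"
    proof (rule minf_ge[OF z])
      fix w assume "w \<in> Fs (- J) z"
      then have "w $ u = z $ u" "\<forall>v. 0 \<le> w $ v" using u by (auto simp: Fs_def)
      then show "z $ u \<le> g w" using gl by metis
    qed
    then show ?thesis using mg_eq[OF z] by simp
  qed
  have mg_nn: "0 \<le> marg_gauge g J z" if z: "\<forall>v. 0 \<le> z $ v" for z J
  proof -
    have "0 \<le> minf g (- J) z" by (rule minf_ge[OF z]) (auto simp: Fs_def gnn)
    then show ?thesis using mg_eq[OF z] by simp
  qed
  have mg_iter: "minf (marg_gauge g K) (- J) y = minf g (- J) y" if y: "\<forall>v. 0 \<le> y $ v" and JK: "J \<subseteq> K" for y J K
  proof -
    have "minf (marg_gauge g K) (- J) y = minf (minf g (- K)) (- J) y"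
      by (rule minf_cong) (simp add: mg_eq)
    also have "\<dots> = minf g (- J \<union> - K) y" by (rule minf_iter[OF y lg])
    also have "- J \<union> - K = - J" using JK by auto
    finally show ?thesis .
  qed
  interpret A0: absm0 Cs h s
  proof
    show "\<And>k. 1 \<le> k \<Longrightarrow> k < length Cs \<Longrightarrow> separator Cs k = {s k}" by (rule sep)
    show "\<And>l. l < length Cs \<Longrightarrow> dep (h l) (Cs ! l)" by (simp add: h_def mg_dep)
    show "\<And>l z u. l < length Cs \<Longrightarrow> u \<in> Cs ! l \<Longrightarrow> \<forall>v. 0 \<le> z $ v \<Longrightarrow> z $ u \<le> h l z"
      by (simp add: h_def mg_ge)
    show "\<And>l z. l < length Cs \<Longrightarrow> \<forall>v. 0 \<le> z $ v \<Longrightarrow> 0 \<le> h l z" by (simp add: h_def mg_nn)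
  qed
  have gT: "g z = TT h s (length Cs) z" if z: "\<forall>v. 0 \<le> z $ v" for z
  proof -
    have "(\<Sum>k\<in>{1..<length Cs}. \<Sum>v\<in>separator Cs k. z $ v) = (\<Sum>k\<in>{1..<length Cs}. z $ s k)"
      by (rule sum.cong) (auto simp: sep)
    then show ?thesis using model[of z] z by (simp add: TT_def h_def)
  qed
  have hsep: "minf g (- {s k}) y = y $ s k" if k: "1 \<le> k" "k < length Cs" and y: "\<forall>v. 0 \<le> y $ v" for k y
  proof (rule antisym)
    show "y $ s k \<le> minf g (- {s k}) y"
    proof (rule minf_ge[OF y])
      fix w assume "w \<in> Fs (- {s k}) y"
      then have "w $ s k = y $ s k" "\<forall>v. 0 \<le> w $ v" by (auto simp: Fs_def)
      then show "y $ s k \<le> g w" using gl by metis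
    qed
  next
    obtain r where r: "r < k" "s k \<in> Cs ! r" using A0.s_earlier[OF k] by blast
    have rN: "r < length Cs" using r k by simp
    have skC: "s k \<in> Cs ! k" using A0.s_in[OF k] .
    have lhk: "lbd (\<lambda>z. h k z - z $ s k)" by (rule lbd_nonneg) (use A0.hge k skC in force)
    have lF: "lbd (\<lambda>z. h r z + (h k z - z $ s k))"
      by (rule lbd_nonneg) (use A0.hge A0.hnn k skC rN in force)
    have "h r y = minf g (- (Cs ! r)) y" by (simp add: h_def mg_eq[OF y])
    also have "\<dots> = minf (TT h s (length Cs)) (- (Cs ! r)) y" by (rule minf_cong) (simp add: gT)
    finally have hr: "h r y = minf (TT h s (length Cs)) (- (Cs ! r)) y" .
    have "minf (\<lambda>z. h r z + (h k z - z $ s k)) (- (Cs ! r)) y \<le> minf (TT h s (length Cs)) (- (Cs ! r)) y"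
      by (rule minf_mono[OF y lF]) (rule A0.T_two[OF r(1) k(2)])
    moreover have "minf (\<lambda>z. h r z + (h k z - z $ s k)) (- (Cs ! r)) y = h r y + minf (\<lambda>z. h k z - z $ s k) (- (Cs ! r)) y"
    proof (rule minf_const_add[OF y lhk])
      fix w assume "w \<in> Fs (- (Cs ! r)) y"
      then have "\<forall>v\<in>Cs ! r. w $ v = y $ v" by (auto simp: Fs_def)
      then show "h r w = h r y" using A0.hdep[OF rN] unfolding dep_def by blast
    qed
    moreover have "minf (\<lambda>z. h k z - z $ s k) (- (Cs ! r)) y = - y $ s k + minf (h k) (- (Cs ! r)) y"
    proof -
      have "minf (\<lambda>z. h k z - z $ s k) (- (Cs ! r)) y = minf (\<lambda>z. - z $ s k + h k z) (- (Cs ! r)) y" by simp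
      also have "\<dots> = - y $ s k + minf (h k) (- (Cs ! r)) y"
        by (rule minf_const_add[OF y lbd_nonneg]) (use A0.hnn k r in \<open>auto simp: Fs_def\<close>)
      finally show ?thesis .
    qed
    ultimately have hk: "minf (h k) (- (Cs ! r)) y \<le> y $ s k" using hr by simp
    have "minf g (- {s k}) y \<le> minf g (- (Cs ! r) \<union> - (Cs ! k)) y"
      by (rule minf_antimono[OF y lg]) (use r skC in auto)
    also have "\<dots> = minf (minf g (- (Cs ! k))) (- (Cs ! r)) y" by (rule minf_iter[OF y lg, symmetric])
    also have "\<dots> = minf (h k) (- (Cs ! r)) y" by (rule minf_cong) (simp add: h_def mg_eq)
    finally show "minf g (- {s k}) y \<le> y $ s k" using hk by simp
  qed
  interpret A: absm Cs h s ge S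
  proof
    show "\<And>l u y. l < length Cs \<Longrightarrow> u \<in> Cs ! l \<Longrightarrow> u \<in> S \<Longrightarrow> \<forall>v. 0 \<le> y $ v \<Longrightarrow> minf (h l) (- {u}) y = y $ u"
    proof -
      fix l u and y :: "real ^ 'v" assume l: "l < length Cs" "u \<in> Cs ! l" "u \<in> S" "\<forall>v. 0 \<le> y $ v"
      obtain k where k: "1 \<le> k" "k < length Cs" "u = s k" using l(3) by (auto simp: S_def)
      have "minf (h l) (- {u}) y = minf g (- {u}) y" unfolding h_def by (rule mg_iter) (use l in auto)
      then show "minf (h l) (- {u}) y = y $ u" using hsep[OF k(1,2) l(4)] k(3) by simp
    qed
    show "\<And>k. 1 \<le> k \<Longrightarrow> k < length Cs \<Longrightarrow> s k \<in> S" by (auto simp: S_def)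
    show "\<And>l a b y. l < length Cs \<Longrightarrow> a \<in> Cs ! l \<Longrightarrow> b \<in> Cs ! l \<Longrightarrow> a \<noteq> b \<Longrightarrow> \<forall>v. 0 \<le> y $ v \<Longrightarrow>
       minf (h l) (- {a, b}) y = ge a b y"
      unfolding h_def ge_def by (subst mg_iter) (auto simp: mg_eq)
    show "\<And>a b. dep (ge a b) {a, b}" by (simp add: ge_def mg_dep)
    show "\<And>a b. ge a b = ge b a" by (simp add: ge_def insert_commute)
    show "\<And>a b z. \<forall>v. 0 \<le> z $ v \<Longrightarrow> z $ a \<le> ge a b z" by (simp add: ge_def mg_ge)
  qed
  have EA: "E = Adj Cs (length Cs)"
  proof (intro ext iffI)
    fix a b assume e: "E a b"
    have "is_clique E {a, b}" using e Esym by (auto simp: is_clique_def)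
    then obtain C where C: "maximal_clique E C" "{a, b} \<subseteq> C" using max_clique_exists by blast
    then have "C \<in> set Cs" using setCs by simp
    then obtain l where "l < length Cs" "Cs ! l = C" by (auto simp: in_set_conv_nth)
    moreover have "a \<noteq> b" using e Eirr by auto
    ultimately show "Adj Cs (length Cs) a b" using C(2) by (auto simp: Adj_def)
  next
    fix a b assume "Adj Cs (length Cs) a b"
    then obtain l where l: "a \<noteq> b" "l < length Cs" "a \<in> Cs ! l" "b \<in> Cs ! l" by (auto simp: Adj_def)
    then have "Cs ! l \<in> set Cs" by simp
    then have "maximal_clique E (Cs ! l)" using setCs by simp
    then show "E a b" using l by (auto simp: maximal_clique_def is_clique_def)
  qed
  have spA: "is_shortest_path (Adj Cs (length Cs)) ps i j" using sp EA by simp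
  have N1: "1 \<le> length Cs"
  proof -
    have w: "is_walk (Adj Cs (length Cs)) ps i j" using sp_walk[OF spA] .
    have "2 \<le> length ps" using walk_len2[OF w ij] .
    then have "Adj Cs (length Cs) (ps ! 0) (ps ! 1)" using walk_nth_edge[OF w, of 0] by simp
    then show ?thesis by (auto simp: Adj_def)
  qed
  define x' where "x' = (\<chi> k. if k = i \<or> k = j then x $ k else 0)"
  have x'nn: "\<forall>v. 0 \<le> x' $ v" using assms(8,9) by (simp add: x'_def)
  have x'i: "x' $ i = x $ i" and x'j: "x' $ j = x $ j" by (simp_all add: x'_def)
  have "marg_gauge g {i, j} x = marg_gauge g {i, j} x'"
    unfolding marg_gauge_def using x'i x'j by simp
  also have "\<dots> = minf g (- {i, j}) x'" by (rule mg_eq[OF x'nn])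
  also have "\<dots> = minf (TT h s (length Cs)) (- {i, j}) x'" by (rule minf_cong) (simp add: gT)
  also have "\<dots> = minf (PP ge ps) (- {i, j}) x'"
    using A.main_ind[OF N1] ij spA x'nn by blast
  also have "\<dots> = (INF y \<in> {y. y $ i = x $ i \<and> y $ j = x $ j \<and> (\<forall>k. 0 \<le> y $ k)}.
       (\<Sum>k\<in>{1..length ps - 1}. marg_gauge g {ps ! (k - 1), ps ! k} y)
       - (\<Sum>k\<in>{1..<length ps - 1}. y $ (ps ! k)))"
  proof -
    have Fs_eq: "Fs (- {i, j}) x' = {y. y $ i = x $ i \<and> y $ j = x $ j \<and> (\<forall>k. 0 \<le> y $ k)}"
      using x'i x'j by (auto simp: Fs_def)
    show ?thesis unfolding minf_def Fs_eq
      by (rule arg_cong[where f=Inf], rule image_cong) (simp_all add: PP_index ge_def)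
  qed
  finally show ?thesis .
qed


end
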